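(* Let $d\ge3$ and consider the VRRW on $\mathcal G_d$. For $\varepsilon>0$ and $t\ge t_0$ let $$A_\varepsilon(t)=\Big\{\min_{i=1,\dots,d}\frac{Z(t,i)}{t}\ge\varepsilon\ \text{ and }\ \max_{i=1,\dots,d}\frac{\sum_{j=1}^{r_i}Z(t,\ell^i_j)}{t}\le t^{-\varepsilon}\Big\},\qquad C_\varepsilon=\Big\{\exists T:\ A_\varepsilon(t)\text{ occurs for all }t\ge T\Big\}.$$ Then $C_\varepsilon\subseteq\{\pi_\infty=\pi_{\mathsf{unif}}\}$ almost surely.
   Context: Let $d\ge 2$ and $r_1,\dots,r_d\ge 0$ be integers. The complete-like graph $\mathcal G_d$ has vertex set $V_d=\{1,\dots,d\}\cup\{\ell^i_r: 1\le i\le d,\ 1\le r\le r_i\}$. The vertices $1,\dots,d$ are called interior, and every pair of distinct interior vertices is joined by an edge; for each $i$, the vertices $\ell^i_1,\dots,\ell^i_{r_i}$ are the leaves attached to $i$, each joined by an edge to $i$ only; there are no other edges. Write $v\sim w$ if $v,w$ are joined by an edge. Vertex-reinforced random walk (VRRW) on $\mathcal G_d$: fix positive integers $z(0,v)$, $v\in V_d$, put $t_0=\sum_{v\in V_d}z(0,v)$, let $X(t_0)\in V_d$ be a given starting vertex, and for $t\ge t_0$ let $Z(t,v)=z(0,v)+\#\{s\in\{t_0+1,\dots,t\}: X(s)=v\}$ (so $\sum_v Z(t,v)=t$). Let $\mathcal F_t=\sigma(X(s),t_0\le s\le t)$. The transitions are $\mathbb P(X(t+1)=w\mid\mathcal F_t)=Z(t,w)/\sum_{y\sim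 X(t)}Z(t,y)$ for $w\sim X(t)$. Let $\pi(t)=(Z(t,v)/t)_{v\in V_d}\in\mathbb R^{|V_d|}$ be the empirical occupation measure, let $\pi_\infty=\lim_{t\to\infty}\pi(t)$ on the event that this limit exists and $\pi_\infty=0$ (zero vector) otherwise, and let $\pi_{\mathsf{unif}}\in\mathbb R^{|V_d|}$ be the vector with coordinate $1/d$ at each interior vertex and $0$ at each leaf. *)

theory Defs
  imports "HOL-Probability.Probability"
begin

text \<open>Vertices of the complete-like graph: Inl i is the interior vertex i (1 <= i <= d),
  Inr (i,k) is the leaf l^i_k (1 <= k <= r i).\<close>
type_synonym vtx = "nat + nat \<times> nat"

definition Vd :: "nat \<Rightarrow> (nat \<Rightarrow> nat) \<Rightarrow> vtx set" where
  "Vd d r = Inl ` {1..d} \<union> {Inr (i, k) | i k. i \<in> {1..d} \<and> k \<in> {1..r i}}"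

definition adj :: "nat \<Rightarrow> (nat \<Rightarrow> nat) \<Rightarrow> vtx \<Rightarrow> vtx \<Rightarrow> bool" where
  "adj d r v w = (case (v, w) of
      (Inl i, Inl j) \<Rightarrow> i \<in> {1..d} \<and> j \<in> {1..d} \<and> i \<noteq> j
    | (Inl i, Inr (j, k)) \<Rightarrow> i = j \<and> i \<in> {1..d} \<and> k \<in> {1..r i}
    | (Inr (j, k), Inl i) \<Rightarrow> i = j \<and> i \<in> {1..d} \<and> k \<in> {1..r i}
    | _ \<Rightarrow> False)"

definition tzero :: "nat \<Rightarrow> (nat \<Rightarrow> nat) \<Rightarrow> (vtx \<Rightarrow> nat) \<Rightarrow> nat" where
  "tzero d r z0 = (\<Sum>v\<in>Vd d r. z0 v)"

text \<open>Z(t,v) along a path h (times t0+1..t counted)\<close>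
definition Zp :: "nat \<Rightarrow> (nat \<Rightarrow> nat) \<Rightarrow> (vtx \<Rightarrow> nat) \<Rightarrow> (nat \<Rightarrow> vtx) \<Rightarrow> nat \<Rightarrow> vtx \<Rightarrow> nat" where
  "Zp d r z0 h t v = z0 v + card {s \<in> {tzero d r z0<..t}. h s = v}"

definition trans_prob :: "nat \<Rightarrow> (nat \<Rightarrow> nat) \<Rightarrow> (vtx \<Rightarrow> nat) \<Rightarrow> (nat \<Rightarrow> vtx) \<Rightarrow> nat \<Rightarrow> vtx \<Rightarrow> real" where
  "trans_prob d r z0 h t w =
     (if adj d r (h t) w
      then real (Zp d r z0 h t w) / (\<Sum>y\<in>{y \<in> Vd d r. adj d r (h t) y}. real (Zp d r z0 h t y))
      else 0)"

text \<open>X is a VRRW on G_d (in M) started at x0 at time t0: the conditional law of X(t+1)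
  given the history F_t, expressed on the atoms of F_t (finitely many histories).\<close>
definition is_vrrw :: "'a measure \<Rightarrow> (nat \<Rightarrow> 'a \<Rightarrow> vtx) \<Rightarrow> nat \<Rightarrow> (nat \<Rightarrow> nat) \<Rightarrow> (vtx \<Rightarrow> nat) \<Rightarrow> vtx \<Rightarrow> bool" where
  "is_vrrw M X d r z0 x0 \<longleftrightarrow>
     prob_space M \<and>
     (\<forall>s. X s \<in> measurable M (count_space UNIV)) \<and>
     (AE \<omega> in M. X (tzero d r z0) \<omega> = x0) \<and>
     (\<forall>t \<ge> tzero d r z0. \<forall>h w.
        measure M {\<omega> \<in> space M. (\<forall>s\<in>{tzero d r z0..t}. X s \<omega> = h s) \<and> X (Suc t) \<omega> = w}
        = trans_prob d r z0 h t w * measure M {\<omega> \<in> space M. \<forall>s\<in>{tzero d r z0..t}. X s \<omega> = h s})"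

definition Z :: "nat \<Rightarrow> (nat \<Rightarrow> nat) \<Rightarrow> (vtx \<Rightarrow> nat) \<Rightarrow> (nat \<Rightarrow> 'a \<Rightarrow> vtx) \<Rightarrow> nat \<Rightarrow> 'a \<Rightarrow> vtx \<Rightarrow> real" where
  "Z d r z0 X t \<omega> v = real (Zp d r z0 (\<lambda>s. X s \<omega>) t v)"

definition pi_t :: "nat \<Rightarrow> (nat \<Rightarrow> nat) \<Rightarrow> (vtx \<Rightarrow> nat) \<Rightarrow> (nat \<Rightarrow> 'a \<Rightarrow> vtx) \<Rightarrow> nat \<Rightarrow> 'a \<Rightarrow> vtx \<Rightarrow> real" where
  "pi_t d r z0 X t \<omega> v = Z d r z0 X t \<omega> v / real t"

text \<open>pi_infty: the limit if it exists (all coordinates on V_d converge), else the zero vector\<close>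
definition pi_inf :: "nat \<Rightarrow> (nat \<Rightarrow> nat) \<Rightarrow> (vtx \<Rightarrow> nat) \<Rightarrow> (nat \<Rightarrow> 'a \<Rightarrow> vtx) \<Rightarrow> 'a \<Rightarrow> vtx \<Rightarrow> real" where
  "pi_inf d r z0 X \<omega> =
     (if \<forall>v\<in>Vd d r. convergent (\<lambda>t. pi_t d r z0 X t \<omega> v)
      then (\<lambda>v. lim (\<lambda>t. pi_t d r z0 X t \<omega> v)) else (\<lambda>v. 0))"

definition pi_unif :: "nat \<Rightarrow> vtx \<Rightarrow> real" where
  "pi_unif d v = (case v of Inl i \<Rightarrow> 1 / real d | Inr _ \<Rightarrow> 0)"

definition A_eps :: "nat \<Rightarrow> (nat \<Rightarrow> nat) \<Rightarrow> (vtx \<Rightarrow> nat) \<Rightarrow> (nat \<Rightarrow> 'a \<Rightarrow> vtx) \<Rightarrow> real \<Rightarrow> nat \<Rightarrow> 'a \<Rightarrow> bool" where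
  "A_eps d r z0 X \<epsilon> t \<omega> \<longleftrightarrow>
     Min ((\<lambda>i. Z d r z0 X t \<omega> (Inl i) / real t) ` {1..d}) \<ge> \<epsilon> \<and>
     Max ((\<lambda>i. (\<Sum>j\<in>{1..r i}. Z d r z0 X t \<omega> (Inr (i, j))) / real t) ` {1..d}) \<le> real t powr (- \<epsilon>)"

definition C_eps :: "nat \<Rightarrow> (nat \<Rightarrow> nat) \<Rightarrow> (vtx \<Rightarrow> nat) \<Rightarrow> (nat \<Rightarrow> 'a \<Rightarrow> vtx) \<Rightarrow> real \<Rightarrow> 'a \<Rightarrow> bool" where
  "C_eps d r z0 X \<epsilon> \<omega> \<longleftrightarrow> (\<exists>T \<ge> tzero d r z0. \<forall>t \<ge> T. A_eps d r z0 X \<epsilon> t \<omega>)"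

end

theory Submission
  imports Defs "HOL-Library.Discrete_Functions"
begin

lemma Vd_finite: "finite (Vd d r)"
proof -
  have "{Inr (i, k) | i k. i \<in> {1..d} \<and> k \<in> {1..r i}} = (\<lambda>(i,k). Inr (i,k)) ` (SIGMA i:{1..d}. {1..r i})"
    by auto
  then show ?thesis unfolding Vd_def by (metis finite_Un finite_imageI finite_atLeastAtMost finite_SigmaI)
qed

lemma adj_Vd2: "adj d r v w \<Longrightarrow> w \<in> Vd d r"
  by (cases v; cases w) (auto simp: adj_def Vd_def split: prod.splits)

lemma adj_Vd1: "adj d r v w \<Longrightarrow> v \<in> Vd d r"
  by (cases v; cases w) (auto simp: adj_def Vd_def split: prod.splits)

lemma tp_nonneg: "trans_prob d r z0 h t w \<ge> 0"
  unfolding trans_prob_def by (auto intro!: divide_nonneg_nonneg sum_nonneg)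

lemma tp_zero: "\<not> adj d r (h t) w \<Longrightarrow> trans_prob d r z0 h t w = 0"
  unfolding trans_prob_def by auto

lemma tp_le1: "trans_prob d r z0 h t w \<le> 1"
proof (cases "adj d r (h t) w")
  case True
  let ?S = "{y \<in> Vd d r. adj d r (h t) y}"
  have "w \<in> ?S" using True adj_Vd2 by blast
  then have "real (Zp d r z0 h t w) \<le> (\<Sum>y\<in>?S. real (Zp d r z0 h t y))"
    by (intro member_le_sum) (auto simp: Vd_finite)
  then show ?thesis using True unfolding trans_prob_def
    by (auto simp: divide_le_eq_1)
qed (simp add: tp_zero)

lemma exists_nbr: assumes "d \<ge> 2" "v \<in> Vd d r" shows "\<exists>w. adj d r v w"
proof -
  from assms(2) consider (a) i where "v = Inl i" "i \<in> {1..d}" | (b) i k where "v = Inr (i,k)" "i\<in>{1..d}" "k \<in> {1..r i}"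
    unfolding Vd_def by auto
  then show ?thesis
  proof cases
    case a
    show ?thesis
    proof (cases "i = 1")
      case True
      then show ?thesis using a assms(1) by (intro exI[of _ "Inl 2"]) (auto simp: adj_def)
    next
      case False
      then show ?thesis using a assms(1) by (intro exI[of _ "Inl 1"]) (auto simp: adj_def)
    qed
  next
    case b
    then show ?thesis by (intro exI[of _ "Inl i"]) (auto simp: adj_def)
  qed
qed

lemma tp_sum1:
  assumes "d \<ge> 2" "h t \<in> Vd d r" "\<forall>v\<in>Vd d r. z0 v > 0"
  shows "(\<Sum>w\<in>Vd d r. trans_prob d r z0 h t w) = 1"
proof -
  let ?S = "{y \<in> Vd d r. adj d r (h t) y}"
  let ?D = "(\<Sum>y\<in>?S. real (Zp d r z0 h t y))"
  obtain w where w: "adj d r (h t) w" using exists_nbr assms by blast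
  then have wS: "w \<in> ?S" using adj_Vd2 by blast
  have "0 < real (Zp d r z0 h t w)" using assms(3) wS unfolding Zp_def by (simp add: add_pos_nonneg)
  also have "\<dots> \<le> ?D" using wS by (intro member_le_sum) (simp_all add: Vd_finite)
  finally have Dpos: "?D > 0" .
  have "(\<Sum>w\<in>Vd d r. trans_prob d r z0 h t w) = (\<Sum>w\<in>?S. trans_prob d r z0 h t w)"
    by (rule sum.mono_neutral_right) (simp_all add: Vd_finite tp_zero)
  also have "\<dots> = (\<Sum>w\<in>?S. real (Zp d r z0 h t w) / ?D)"
    by (intro sum.cong refl) (simp add: trans_prob_def)
  also have "\<dots> = ?D / ?D" by (rule sum_divide_distrib[symmetric])
  finally show ?thesis using Dpos by simp
qed

lemma Zp_cong: "(\<forall>u\<in>{tzero d r z0..t}. g u = h u) \<Longrightarrow> Zp d r z0 g t = Zp d r z0 h t"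
  unfolding Zp_def by (intro ext arg_cong[where f="\<lambda>A. _ + card A"]) auto

lemma tp_cong: "tzero d r z0 \<le> t \<Longrightarrow> (\<forall>u\<in>{tzero d r z0..t}. g u = h u) \<Longrightarrow> trans_prob d r z0 g t = trans_prob d r z0 h t"
  using Zp_cong[of d r z0 t g h] unfolding trans_prob_def by auto

locale vrrw_loc =
  fixes M :: "'a measure" and X :: "nat \<Rightarrow> 'a \<Rightarrow> vtx" and d :: nat and r :: "nat \<Rightarrow> nat"
    and z0 :: "vtx \<Rightarrow> nat" and x0 :: vtx
  assumes d2: "d \<ge> 2" and z0pos: "\<forall>v\<in>Vd d r. z0 v > 0" and x0V: "x0 \<in> Vd d r"
    and vr: "is_vrrw M X d r z0 x0"
begin

abbreviation "T0 \<equiv> tzero d r z0"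
abbreviation "V \<equiv> Vd d r"
abbreviation "tp \<equiv> trans_prob d r z0"

lemma prob: "prob_space M" using vr unfolding is_vrrw_def by auto

sublocale prob_space M by (rule prob)

lemma Xmeas[measurable]: "X s \<in> measurable M (count_space UNIV)"
  using vr unfolding is_vrrw_def by auto

lemma AE0: "AE \<omega> in M. X T0 \<omega> = x0"
  using vr unfolding is_vrrw_def by auto

lemma stepP: "t \<ge> T0 \<Longrightarrow> measure M {\<omega>\<in>space M. (\<forall>s\<in>{T0..t}. X s \<omega> = h s) \<and> X (Suc t) \<omega> = w}
   = tp h t w * measure M {\<omega>\<in>space M. \<forall>s\<in>{T0..t}. X s \<omega> = h s}"
  using vr unfolding is_vrrw_def by blast

definition Hs :: "nat \<Rightarrow> (nat \<Rightarrow> vtx) set" where "Hs t = PiE {T0..t} (\<lambda>_. V)"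
definition Ev :: "nat \<Rightarrow> (nat \<Rightarrow> vtx) \<Rightarrow> 'a set" where "Ev t h = {\<omega>\<in>space M. \<forall>s\<in>{T0..t}. X s \<omega> = h s}"
definition q :: "nat \<Rightarrow> (nat \<Rightarrow> vtx) \<Rightarrow> real" where "q t h = measure M (Ev t h)"

lemma pred_X: "{\<omega>\<in>space M. X s \<omega> = c} \<in> sets M"
proof -
  have "{\<omega>\<in>space M. X s \<omega> = c} = X s -` {c} \<inter> space M" by auto
  then show ?thesis using measurable_sets[OF Xmeas, of "{c}" s] by simp
qed

lemma Ev_sets[measurable]: "Ev t h \<in> sets M"
proof -
  have "Ev t h = space M \<inter> (\<Inter>s\<in>{T0..t}. {\<omega>\<in>space M. X s \<omega> = h s})"
    unfolding Ev_def by auto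
  also have "\<dots> \<in> sets M"
  proof (cases "{T0..t} = {}")
    case True then show ?thesis by simp
  next
    case False
    then show ?thesis using pred_X by (intro sets.Int sets.top sets.finite_INT) auto
  qed
  finally show ?thesis .
qed

lemma finite_Hs: "finite (Hs t)"
  unfolding Hs_def by (intro finite_PiE) (auto simp: Vd_finite)

lemma q_nonneg: "q t h \<ge> 0" unfolding q_def by simp

lemma Ev_Suc: assumes "t \<ge> T0"
  shows "Ev (Suc t) (h(Suc t := w)) = {\<omega>\<in>space M. (\<forall>s\<in>{T0..t}. X s \<omega> = h s) \<and> X (Suc t) \<omega> = w}"
proof -
  have e: "{T0..Suc t} = insert (Suc t) {T0..t}" using assms by auto
  show ?thesis unfolding Ev_def e by auto
qed

lemma q_Suc: "t \<ge> T0 \<Longrightarrow> q (Suc t) (h(Suc t := w)) = tp h t w * q t h"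
  unfolding q_def using Ev_Suc stepP by (simp add: Ev_def)

lemma Hs_Suc: assumes "t \<ge> T0"
  shows "Hs (Suc t) = (\<lambda>(y, g). g(Suc t := y)) ` (V \<times> Hs t)"
proof -
  have e: "{T0..Suc t} = insert (Suc t) {T0..t}" using assms by auto
  show ?thesis unfolding Hs_def e PiE_insert_eq by simp
qed

lemma sum_Hs_Suc: assumes "t \<ge> T0"
  shows "(\<Sum>g\<in>Hs (Suc t). F g) = (\<Sum>h\<in>Hs t. \<Sum>w\<in>V. F (h(Suc t := w)))"
proof -
  have inj: "inj_on (\<lambda>(y, g). g(Suc t := y)) (V \<times> Hs t)"
    unfolding Hs_def by (rule inj_combinator) simp
  have "(\<Sum>g\<in>Hs (Suc t). F g) = (\<Sum>(w,h)\<in>V \<times> Hs t. F (h(Suc t := w)))"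
    unfolding Hs_Suc[OF assms] by (subst sum.reindex[OF inj]) (simp add: case_prod_unfold)
  also have "\<dots> = (\<Sum>w\<in>V. \<Sum>h\<in>Hs t. F (h(Suc t := w)))"
    by (rule sum.cartesian_product[symmetric])
  also have "\<dots> = (\<Sum>h\<in>Hs t. \<Sum>w\<in>V. F (h(Suc t := w)))"
    by (rule sum.swap)
  finally show ?thesis .
qed

lemma Hs_T0: "Hs T0 = (\<lambda>w. (\<lambda>_. undefined)(T0 := w)) ` V"
proof -
  have e: "{T0..T0} = insert T0 {}" by auto
  show ?thesis unfolding Hs_def e PiE_insert_eq by auto
qed

lemma Hs_in_V: "h \<in> Hs t \<Longrightarrow> s \<in> {T0..t} \<Longrightarrow> h s \<in> V"
  unfolding Hs_def by auto

lemma q_total: "t \<ge> T0 \<Longrightarrow> (\<Sum>h\<in>Hs t. q t h) = 1"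
proof (induction t rule: dec_induct)
  case base
  have inj: "inj_on (\<lambda>w. (\<lambda>_. undefined)(T0 := w)) V"
    by (intro inj_onI) (metis fun_upd_same)
  have 1: "(\<Sum>h\<in>Hs T0. q T0 h) = (\<Sum>w\<in>V. measure M {\<omega>\<in>space M. X T0 \<omega> = w})"
    unfolding Hs_T0 by (subst sum.reindex[OF inj]) (simp add: q_def Ev_def)
  have 2: "(\<Sum>w\<in>V. measure M {\<omega>\<in>space M. X T0 \<omega> = w}) = measure M (\<Union>w\<in>V. {\<omega>\<in>space M. X T0 \<omega> = w})"
    by (rule measure_finite_Union[symmetric]) (auto simp: Vd_finite pred_X disjoint_family_on_def)
  have 3: "(\<Union>w\<in>V. {\<omega>\<in>space M. X T0 \<omega> = w}) = {\<omega>\<in>space M. X T0 \<omega> \<in> V}" by auto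
  have 4: "measure M {\<omega>\<in>space M. X T0 \<omega> \<in> V} = 1"
  proof (subst prob_Collect_eq_1)
    have "{\<omega>\<in>space M. X T0 \<omega> \<in> V} = X T0 -` V \<inter> space M" by auto
    then show "{\<omega>\<in>space M. X T0 \<omega> \<in> V} \<in> sets M" using measurable_sets[OF Xmeas, of V T0] by simp
    show "AE \<omega> in M. X T0 \<omega> \<in> V" using AE0 x0V by auto
  qed
  show ?case using 1 2 3 4 by simp
next
  case (step t)
  have 1: "(\<Sum>g\<in>Hs (Suc t). q (Suc t) g) = (\<Sum>h\<in>Hs t. \<Sum>w\<in>V. tp h t w * q t h)"
    using step(1) by (simp add: sum_Hs_Suc q_Suc)
  have 2: "(\<Sum>h\<in>Hs t. \<Sum>w\<in>V. tp h t w * q t h) = (\<Sum>h\<in>Hs t. q t h)"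
  proof (intro sum.cong refl)
    fix h assume h: "h \<in> Hs t"
    have "h t \<in> V" using Hs_in_V[OF h] step(1) by auto
    then have "(\<Sum>w\<in>V. tp h t w) = 1" by (rule tp_sum1[OF d2 _ z0pos])
    then show "(\<Sum>w\<in>V. tp h t w * q t h) = q t h" by (simp add: sum_distrib_right[symmetric])
  qed
  show ?case using 1 2 step(3) by simp
qed

lemma Ev_disj: assumes "h \<in> Hs t" "g \<in> Hs t" "h \<noteq> g" shows "Ev t h \<inter> Ev t g = {}"
proof -
  obtain s where s: "h s \<noteq> g s" using assms(3) by auto
  have "s \<in> {T0..t}"
  proof (rule ccontr)
    assume "s \<notin> {T0..t}"
    then have "h s = undefined" "g s = undefined" using assms(1,2) unfolding Hs_def by (auto simp: PiE_def extensional_def)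
    then show False using s by simp
  qed
  then show ?thesis using s unfolding Ev_def by auto
qed

lemma good_eq: "(\<Union>h\<in>Hs t. Ev t h) = {\<omega>\<in>space M. \<forall>s\<in>{T0..t}. X s \<omega> \<in> V}"
proof
  show "(\<Union>h\<in>Hs t. Ev t h) \<subseteq> {\<omega>\<in>space M. \<forall>s\<in>{T0..t}. X s \<omega> \<in> V}"
  proof
    fix \<omega> assume "\<omega> \<in> (\<Union>h\<in>Hs t. Ev t h)"
    then obtain h where h: "h \<in> Hs t" "\<omega> \<in> Ev t h" by blast
    then show "\<omega> \<in> {\<omega>\<in>space M. \<forall>s\<in>{T0..t}. X s \<omega> \<in> V}"
      unfolding Ev_def using Hs_in_V[OF h(1)] by auto
  qed
  show "{\<omega>\<in>space M. \<forall>s\<in>{T0..t}. X s \<omega> \<in> V} \<subseteq> (\<Union>h\<in>Hs t. Ev t h)"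
  proof
    fix \<omega> assume w: "\<omega> \<in> {\<omega>\<in>space M. \<forall>s\<in>{T0..t}. X s \<omega> \<in> V}"
    let ?h = "restrict (\<lambda>s. X s \<omega>) {T0..t}"
    have "?h \<in> Hs t" using w unfolding Hs_def by auto
    moreover have "\<omega> \<in> Ev t ?h" using w unfolding Ev_def by auto
    ultimately show "\<omega> \<in> (\<Union>h\<in>Hs t. Ev t h)" by blast
  qed
qed

lemma good_meas: assumes "t \<ge> T0" shows "measure M (\<Union>h\<in>Hs t. Ev t h) = 1"
proof -
  have "measure M (\<Union>h\<in>Hs t. Ev t h) = (\<Sum>h\<in>Hs t. q t h)"
    unfolding q_def using Ev_disj
    by (intro measure_finite_Union) (auto simp: finite_Hs disjoint_family_on_def)
  then show ?thesis using q_total[OF assms] by simp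
qed

lemma good_sets: "(\<Union>h\<in>Hs t. Ev t h) \<in> sets M"
  by (rule sets.finite_UN[OF finite_Hs]) (rule Ev_sets)

lemma AE_inV: "AE \<omega> in M. \<forall>s\<ge>T0. X s \<omega> \<in> V"
proof -
  have "AE \<omega> in M. \<forall>s\<in>{T0..t}. X s \<omega> \<in> V" for t
  proof (cases "t \<ge> T0")
    case True
    have S: "{\<omega>\<in>space M. \<forall>s\<in>{T0..t}. X s \<omega> \<in> V} \<in> sets M"
      using good_sets[of t] good_eq[of t] by simp
    have "prob {\<omega>\<in>space M. \<forall>s\<in>{T0..t}. X s \<omega> \<in> V} = 1"
      using good_meas[OF True] good_eq[of t] by simp
    then show ?thesis using prob_Collect_eq_1[OF S] by simp
  next
    case False then show ?thesis by simp
  qed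
  then have "AE \<omega> in M. \<forall>t. \<forall>s\<in>{T0..t}. X s \<omega> \<in> V" by (simp add: AE_all_countable)
  then show ?thesis
  proof (rule eventually_mono)
    fix \<omega> assume a: "\<forall>t. \<forall>s\<in>{T0..t}. X s \<omega> \<in> V"
    show "\<forall>s\<ge>T0. X s \<omega> \<in> V"
    proof (intro allI impI)
      fix s assume "T0 \<le> s" then show "X s \<omega> \<in> V" using a[rule_format, of s s] by simp
    qed
  qed
qed

end

lemma lip_lemma:
  fixes F :: "nat \<Rightarrow> real"
  assumes step: "\<And>t. t \<ge> c \<Longrightarrow> \<bar>F (Suc t) - F t\<bar> \<le> 1"
    and cs: "c \<le> s" and st: "s \<le> t"
  shows "\<bar>F t - F s\<bar> \<le> real t - real s"
  using st
proof (induction t rule: dec_induct)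
  case base then show ?case by simp
next
  case (step t)
  have "\<bar>F (Suc t) - F s\<bar> \<le> \<bar>F (Suc t) - F t\<bar> + \<bar>F t - F s\<bar>" by linarith
  also have "\<dots> \<le> 1 + (real t - real s)" using assms(1)[of t] step cs by linarith
  finally show ?case by simp
qed

lemma sq_lemma:
  fixes F :: "nat \<Rightarrow> real" and c :: nat
  assumes step: "\<And>t. t \<ge> c \<Longrightarrow> \<bar>F (Suc t) - F t\<bar> \<le> 1"
    and ev: "\<And>n::nat. eventually (\<lambda>k. \<bar>F ((k+c)^2)\<bar> < (1/(real n+1)) * real ((k+c)^2)) sequentially"
  shows "(\<lambda>t. F t / real t) \<longlonglongrightarrow> 0"
proof (rule LIMSEQ_I)
  fix e :: real assume e: "e > 0"
  obtain n :: nat where n: "1/(real n+1) < e/2"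
  proof -
    obtain n :: nat where "2/e < real n" using reals_Archimedean2 by blast
    then have "2/e < real n + 1" by linarith
    then have "1/(real n + 1) < e/2" using e by (simp add: field_simps)
    then show ?thesis using that by blast
  qed
  obtain K where K: "\<And>k. k \<ge> K \<Longrightarrow> \<bar>F ((k+c)^2)\<bar> < (1/(real n+1)) * real ((k+c)^2)"
    using ev[of n] unfolding eventually_sequentially by blast
  obtain m1 :: nat where m1: "4/e < real m1" using reals_Archimedean2 by blast
  define m0 where "m0 = m1 + K + c + 1"
  have m0e: "2 / real m0 < e/2"
  proof -
    have "4/e < real m0" using m1 unfolding m0_def by simp
    then have "4 < e * real m0" using e by (simp add: field_simps)
    then show ?thesis using e unfolding m0_def by (simp add: field_simps)
  qed
  show "\<exists>N. \<forall>t\<ge>N. norm (F t / real t - 0) < e"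
  proof (intro exI allI impI)
    fix t assume t: "t \<ge> m0^2"
    define m where "m = floor_sqrt t"
    have mge: "m \<ge> m0" unfolding m_def using t by (intro le_floor_sqrtI) simp
    have m2: "m^2 \<le> t" unfolding m_def by simp
    have m3: "t < (Suc m)^2" unfolding m_def by (rule Suc_floor_sqrt_power2_gt)
    have mpos: "m \<ge> 1" using mge unfolding m0_def by simp
    have mc: "m \<ge> c + K" using mge unfolding m0_def by simp
    have mK: "(m - c) + c = m" "m - c \<ge> K" using mc by auto
    have Fm: "\<bar>F (m^2)\<bar> < (1/(real n+1)) * real (m^2)" using K[OF mK(2)] mK(1) by simp
    have c2: "c \<le> m^2" using mc mpos by (metis le_add1 le_trans power2_nat_le_imp_le le_square power2_eq_square)
    have L: "\<bar>F t - F (m^2)\<bar> \<le> real t - real (m^2)" by (rule lip_lemma[where F=F]) (use step c2 m2 in auto)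
    have tm: "real t - real (m^2) \<le> 2 * real m"
    proof -
      have "t \<le> m^2 + 2*m" using m3 by (simp add: power2_eq_square)
      then show ?thesis by linarith
    qed
    have tpos: "real t \<ge> real m * real m" using m2 by (simp add: power2_eq_square of_nat_mult[symmetric] del: of_nat_mult)
    have mpos': "real m \<ge> 1" using mpos by simp
    have "\<bar>F t\<bar> < (1/(real n+1)) * real t + 2 * real m"
    proof -
      have "(1/(real n+1)) * real (m^2) \<le> (1/(real n+1)) * real t"
        using m2 by (intro mult_left_mono) auto
      then show ?thesis using Fm L tm by linarith
    qed
    also have "\<dots> \<le> (e/2) * real t + 2 * real m" using n by (intro add_right_mono mult_right_mono) auto
    finally have A: "\<bar>F t\<bar> < (e/2) * real t + 2 * real m" .
    have B: "2 * real m \<le> (2 / real m0) * real t"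
    proof -
      have "2 * real m = (2 / real m) * (real m * real m)" using mpos' by simp
      also have "\<dots> \<le> (2 / real m) * real t" using tpos mpos' by (intro mult_left_mono) auto
      also have "\<dots> \<le> (2 / real m0) * real t"
        using mge mpos' unfolding m0_def by (intro mult_right_mono divide_left_mono) auto
      finally show ?thesis .
    qed
    have "real m * real m \<ge> 1 * 1" using mpos' by (intro mult_mono) auto
    then have tpos2: "real t > 0" using tpos by linarith
    have "\<bar>F t\<bar> < (e/2) * real t + (e/2) * real t"
      using A B m0e tpos2 by (smt (verit) mult_strict_right_mono)
    then have "\<bar>F t\<bar> < e * real t" by simp
    then show "norm (F t / real t - 0) < e" using tpos2 by (simp add: abs_divide divide_less_eq)
  qed
qed

context vrrw_loc begin

lemma T0_pos: "T0 \<ge> 1"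
proof -
  have "Inl 1 \<in> V" using d2 unfolding Vd_def by auto
  then have "z0 (Inl 1) \<le> T0" unfolding tzero_def by (intro member_le_sum) (auto simp: Vd_finite)
  moreover have "z0 (Inl 1) > 0" using z0pos \<open>Inl 1 \<in> V\<close> by auto
  ultimately show ?thesis by simp
qed

definition G :: "nat \<Rightarrow> nat \<Rightarrow> (nat \<Rightarrow> vtx) \<Rightarrow> real" where
  "G j t h = (\<Sum>s\<in>{T0..<t}. ((if h (Suc s) = Inl j then 1 else 0) - tp h s (Inl j)))"

lemma G_cong: "(\<forall>u\<in>{T0..t}. g u = h u) \<Longrightarrow> G j t g = G j t h"
  unfolding G_def
proof (intro sum.cong refl)
  fix s assume a: "\<forall>u\<in>{T0..t}. g u = h u" and s: "s \<in> {T0..<t}"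
  have "g (Suc s) = h (Suc s)" using a s by auto
  moreover have "tp g s = tp h s" using s a by (intro tp_cong) auto
  ultimately show "(if g (Suc s) = Inl j then 1 else 0) - tp g s (Inl j) =
         (if h (Suc s) = Inl j then 1 else 0) - tp h s (Inl j)" by simp
qed

lemma G_Suc_gen: "t \<ge> T0 \<Longrightarrow> G j (Suc t) g = G j t g + ((if g (Suc t) = Inl j then 1 else 0) - tp g t (Inl j))"
proof -
  assume t: "t \<ge> T0"
  have e: "{T0..<Suc t} = insert t {T0..<t}" using t by auto
  show ?thesis unfolding G_def e by (simp add: add.commute)
qed

lemma G_step: "t \<ge> T0 \<Longrightarrow> \<bar>G j (Suc t) g - G j t g\<bar> \<le> 1"
  using G_Suc_gen[of t j g] tp_nonneg[of d r z0 g t "Inl j"] tp_le1[of d r z0 g t "Inl j"] by auto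

lemma G_Suc: "t \<ge> T0 \<Longrightarrow> G j (Suc t) (h(Suc t := w)) = G j t h + ((if w = Inl j then 1 else 0) - tp h t (Inl j))"
proof -
  assume t: "t \<ge> T0"
  have 1: "G j t (h(Suc t := w)) = G j t h" by (rule G_cong) auto
  have 2: "tp (h(Suc t := w)) t = tp h t" using t by (intro tp_cong) auto
  show ?thesis using G_Suc_gen[OF t, of j "h(Suc t := w)"] 1 2 by simp
qed

lemma G_T0: "G j T0 h = 0" unfolding G_def by simp

lemma tp_ind: "(\<Sum>w\<in>V. tp h t w * (if w = Inl j then 1 else 0)) = tp h t (Inl j)"
proof (cases "Inl j \<in> V")
  case True
  have "(\<Sum>w\<in>V. tp h t w * (if w = Inl j then 1 else 0)) = (\<Sum>w\<in>V. if w = Inl j then tp h t w else 0)"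
    by (intro sum.cong) auto
  also have "\<dots> = tp h t (Inl j)" using True by (simp add: Vd_finite)
  finally show ?thesis .
next
  case False
  then have "\<not> adj d r (h t) (Inl j)" using adj_Vd2 by blast
  then have "tp h t (Inl j) = 0" by (rule tp_zero)
  moreover have "(\<Sum>w\<in>V. tp h t w * (if w = Inl j then 1 else 0)) = 0" using False by (intro sum.neutral) auto
  ultimately show ?thesis by simp
qed

lemma inner_bound:
  assumes ht: "h t \<in> V"
  shows "(\<Sum>w\<in>V. (x + ((if w = Inl j then 1 else 0) - tp h t (Inl j)))^2 * tp h t w) \<le> x^2 + 1"
proof -
  let ?p = "tp h t (Inl j)"
  define e where "e (w::vtx) = (if w = Inl j then 1 else 0) - ?p" for w
  have s1: "(\<Sum>w\<in>V. tp h t w) = 1" by (rule tp_sum1) (use d2 ht z0pos in auto)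
  have s2: "(\<Sum>w\<in>V. tp h t w * e w) = 0"
  proof -
    have "(\<Sum>w\<in>V. tp h t w * e w) = (\<Sum>w\<in>V. tp h t w * (if w = Inl j then 1 else 0)) - ?p * (\<Sum>w\<in>V. tp h t w)"
      unfolding e_def by (simp add: algebra_simps sum_subtractf sum_distrib_left)
    then show ?thesis using tp_ind s1 by simp
  qed
  have eb: "(e w)^2 \<le> 1" for w
  proof -
    have "\<bar>e w\<bar> \<le> 1"
      using tp_nonneg[of d r z0 h t "Inl j"] tp_le1[of d r z0 h t "Inl j"] unfolding e_def by auto
    then have "\<bar>e w\<bar>^2 \<le> 1^2" by (intro power_mono) auto
    then show ?thesis by simp
  qed
  have s3: "(\<Sum>w\<in>V. tp h t w * (e w)^2) \<le> 1"
  proof -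
    have "(\<Sum>w\<in>V. tp h t w * (e w)^2) \<le> (\<Sum>w\<in>V. tp h t w * 1)"
      using eb tp_nonneg by (intro sum_mono mult_left_mono) auto
    then show ?thesis using s1 by simp
  qed
  have "(\<Sum>w\<in>V. (x + e w)^2 * tp h t w) = x^2 * (\<Sum>w\<in>V. tp h t w) + 2 * x * (\<Sum>w\<in>V. tp h t w * e w) + (\<Sum>w\<in>V. tp h t w * (e w)^2)"
    by (simp add: power2_eq_square algebra_simps sum.distrib sum_distrib_left)
  also have "\<dots> \<le> x^2 + 1" using s1 s2 s3 by simp
  finally show ?thesis unfolding e_def .
qed

lemma var_bound: "t \<ge> T0 \<Longrightarrow> (\<Sum>h\<in>Hs t. (G j t h)^2 * q t h) \<le> real t - real T0"
proof (induction t rule: dec_induct)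
  case base then show ?case by (simp add: G_T0)
next
  case (step t)
  have "(\<Sum>g\<in>Hs (Suc t). (G j (Suc t) g)^2 * q (Suc t) g)
      = (\<Sum>h\<in>Hs t. \<Sum>w\<in>V. (G j t h + ((if w = Inl j then 1 else 0) - tp h t (Inl j)))^2 * (tp h t w * q t h))"
    using step(1) by (simp add: sum_Hs_Suc q_Suc G_Suc)
  also have "\<dots> \<le> (\<Sum>h\<in>Hs t. ((G j t h)^2 + 1) * q t h)"
  proof (intro sum_mono)
    fix h assume h: "h \<in> Hs t"
    have ht: "h t \<in> V" using Hs_in_V[OF h] step(1) by auto
    have "(\<Sum>w\<in>V. (G j t h + ((if w = Inl j then 1 else 0) - tp h t (Inl j)))^2 * (tp h t w * q t h))
       = (\<Sum>w\<in>V. (G j t h + ((if w = Inl j then 1 else 0) - tp h t (Inl j)))^2 * tp h t w) * q t h"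
      by (simp add: sum_distrib_right mult.assoc)
    also have "\<dots> \<le> ((G j t h)^2 + 1) * q t h"
      using inner_bound[of h t, OF ht] q_nonneg by (intro mult_right_mono) auto
    finally show "(\<Sum>w\<in>V. (G j t h + ((if w = Inl j then 1 else 0) - tp h t (Inl j)))^2 * (tp h t w * q t h))
       \<le> ((G j t h)^2 + 1) * q t h" .
  qed
  also have "\<dots> = (\<Sum>h\<in>Hs t. (G j t h)^2 * q t h) + (\<Sum>h\<in>Hs t. q t h)"
    by (simp add: algebra_simps sum.distrib)
  also have "\<dots> \<le> (real t - real T0) + 1" using step(3) q_total[OF step(1)] by simp
  finally show ?case using step(1) by simp
qed

definition Bad :: "nat \<Rightarrow> nat \<Rightarrow> real \<Rightarrow> 'a set" where
  "Bad j t c = (space M - (\<Union>h\<in>Hs t. Ev t h)) \<union> (\<Union>h\<in>{h\<in>Hs t. c \<le> \<bar>G j t h\<bar>}. Ev t h)"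

lemma Bad_sets[measurable]: "Bad j t c \<in> sets M"
  unfolding Bad_def using finite_Hs
  by (intro sets.Un sets.Diff sets.top good_sets sets.finite_UN) auto

lemma Bad_meas: assumes t: "t \<ge> T0" and c: "c > 0"
  shows "measure M (Bad j t c) \<le> (real t - real T0) / c^2"
proof -
  let ?A = "space M - (\<Union>h\<in>Hs t. Ev t h)"
  let ?S = "{h\<in>Hs t. c \<le> \<bar>G j t h\<bar>}"
  let ?U = "\<Union>h\<in>?S. Ev t h"
  have Anull: "?A \<in> null_sets M"
  proof -
    have "prob ?A = 0" using prob_compl[OF good_sets[of t]] good_meas[OF t] by simp
    then show ?thesis using good_sets[of t] by (auto simp: null_sets_def emeasure_eq_measure)
  qed
  have Us: "?U \<in> sets M" using finite_Hs by (intro sets.finite_UN) auto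
  have "measure M (Bad j t c) = measure M ?U"
    unfolding Bad_def by (subst Un_commute) (rule measure_Un_null_set[OF Us Anull])
  also have "\<dots> = (\<Sum>h\<in>?S. q t h)"
    unfolding q_def using Ev_disj finite_Hs
    by (intro measure_finite_Union) (auto simp: disjoint_family_on_def)
  also have "\<dots> \<le> (\<Sum>h\<in>?S. (G j t h)^2 / c^2 * q t h)"
  proof (intro sum_mono)
    fix h assume "h \<in> ?S"
    then have "c \<le> \<bar>G j t h\<bar>" by simp
    then have "c^2 \<le> (G j t h)^2" using c by (metis abs_ge_zero less_le_trans order_less_imp_le power2_abs power_mono)
    then have c2: "1 \<le> (G j t h)^2 / c^2" using c by simp
    show "q t h \<le> (G j t h)^2 / c^2 * q t h" using mult_right_mono[OF c2 q_nonneg[of t h]] by simp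
  qed
  also have "\<dots> \<le> (\<Sum>h\<in>Hs t. (G j t h)^2 / c^2 * q t h)"
    using finite_Hs q_nonneg by (intro sum_mono2) auto
  also have "\<dots> = (\<Sum>h\<in>Hs t. (G j t h)^2 * q t h) / c^2"
    by (simp add: sum_divide_distrib)
  also have "\<dots> \<le> (real t - real T0) / c^2"
    using var_bound[OF t] by (intro divide_right_mono) auto
  finally show ?thesis .
qed

lemma Bad_contains: assumes "\<omega> \<in> space M" "c \<le> \<bar>G j t (\<lambda>s. X s \<omega>)\<bar>" shows "\<omega> \<in> Bad j t c"
proof (cases "\<omega> \<in> (\<Union>h\<in>Hs t. Ev t h)")
  case True
  then obtain h where h: "h \<in> Hs t" "\<omega> \<in> Ev t h" by blast
  then have "G j t (\<lambda>s. X s \<omega>) = G j t h" by (intro G_cong) (auto simp: Ev_def)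
  then show ?thesis using h assms unfolding Bad_def by auto
next
  case False then show ?thesis using assms unfolding Bad_def by auto
qed

lemma AE_sub: assumes eta: "\<eta> > 0"
  shows "AE \<omega> in M. eventually (\<lambda>k. \<bar>G j ((k+T0)^2) (\<lambda>s. X s \<omega>)\<bar> < \<eta> * real ((k+T0)^2)) sequentially"
proof -
  define A where "A k = Bad j ((k+T0)^2) (\<eta> * real ((k+T0)^2))" for k
  have bound: "measure M (A k) \<le> (1/\<eta>^2) * inverse (real (Suc k) ^ 2)" for k
  proof -
    let ?t = "(k+T0)^2"
    have tT: "?t \<ge> T0" by (metis le_add2 power2_nat_le_imp_le le_square power2_eq_square le_trans)
    have kpos: "real (k + T0) \<ge> real (Suc k)" using T0_pos by simp
    have cpos: "\<eta> * real ?t > 0" using eta T0_pos by simp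
    have "measure M (A k) \<le> (real ?t - real T0) / (\<eta> * real ?t)^2"
      unfolding A_def by (rule Bad_meas[OF tT cpos])
    also have "\<dots> \<le> real ?t / (\<eta> * real ?t)^2"
      by (intro divide_right_mono) auto
    also have "\<dots> = (1/\<eta>^2) * inverse (real (k+T0) ^ 2)"
    proof -
      have x: "real (k+T0) > 0" using T0_pos by simp
      have g: "y / (\<eta> * y)^2 = (1/\<eta>^2) * inverse y" if "y > 0" for y :: real
        using that eta by (simp add: power2_eq_square field_simps)
      have "real ?t > 0" using x by simp
      then have A: "real ?t / (\<eta> * real ?t)^2 = (1/\<eta>^2) * inverse (real ?t)" by (rule g)
      have B: "inverse (real ?t) = inverse (real (k+T0) ^ 2)" by (simp only: of_nat_power)
      show ?thesis by (simp only: A B)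
    qed
    also have "\<dots> \<le> (1/\<eta>^2) * inverse (real (Suc k) ^ 2)"
      using kpos by (intro mult_left_mono le_imp_inverse_le power_mono) auto
    finally show ?thesis .
  qed
  have summ: "summable (\<lambda>k. measure M (A k))"
  proof (rule summable_comparison_test')
    show "summable (\<lambda>k. (1/\<eta>^2) * inverse (real (Suc k) ^ 2))"
      by (intro summable_mult) (subst summable_Suc_iff, rule inverse_power_summable, simp)
    show "norm (measure M (A k)) \<le> (1/\<eta>^2) * inverse (real (Suc k) ^ 2)" for k
      using bound[of k] by simp
  qed
  have "AE \<omega> in M. eventually (\<lambda>k. \<omega> \<in> space M - A k) sequentially"
    by (rule borel_cantelli_AE1[OF _ _ summ]) (auto simp: A_def emeasure_eq_measure)
  then show ?thesis
  proof (rule AE_mp[OF _ AE_I2], intro impI)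
    fix \<omega> assume w: "\<omega> \<in> space M" and ev: "eventually (\<lambda>k. \<omega> \<in> space M - A k) sequentially"
    show "eventually (\<lambda>k. \<bar>G j ((k+T0)^2) (\<lambda>s. X s \<omega>)\<bar> < \<eta> * real ((k+T0)^2)) sequentially"
      using ev
    proof (rule eventually_mono)
      fix k assume wk: "\<omega> \<in> space M - A k"
      show "\<bar>G j ((k+T0)^2) (\<lambda>s. X s \<omega>)\<bar> < \<eta> * real ((k+T0)^2)"
      proof (rule ccontr)
        assume "\<not> \<bar>G j ((k+T0)^2) (\<lambda>s. X s \<omega>)\<bar> < \<eta> * real ((k+T0)^2)"
        then have "\<eta> * real ((k+T0)^2) \<le> \<bar>G j ((k+T0)^2) (\<lambda>s. X s \<omega>)\<bar>" by simp
        then have "\<omega> \<in> Bad j ((k+T0)^2) (\<eta> * real ((k+T0)^2))" by (rule Bad_contains[OF w])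
        then show False using wk unfolding A_def by simp
      qed
    qed
  qed
qed

lemma AE_mart: "AE \<omega> in M. \<forall>j. (\<lambda>t. G j t (\<lambda>s. X s \<omega>) / real t) \<longlonglongrightarrow> 0"
proof -
  have A: "AE \<omega> in M. eventually (\<lambda>k. \<bar>G j ((k+T0)^2) (\<lambda>s. X s \<omega>)\<bar> < (1/(real n+1)) * real ((k+T0)^2)) sequentially" for j n
    by (rule AE_sub) simp
  have "AE \<omega> in M. \<forall>j. \<forall>n::nat. eventually (\<lambda>k. \<bar>G j ((k+T0)^2) (\<lambda>s. X s \<omega>)\<bar> < (1/(real n+1)) * real ((k+T0)^2)) sequentially"
    unfolding AE_all_countable using A by blast
  then show ?thesis
  proof (rule eventually_mono, intro allI)
    fix \<omega> j
    assume a: "\<forall>j. \<forall>n::nat. eventually (\<lambda>k. \<bar>G j ((k+T0)^2) (\<lambda>s. X s \<omega>)\<bar> < (1/(real n+1)) * real ((k+T0)^2)) sequentially"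
    show "(\<lambda>t. G j t (\<lambda>s. X s \<omega>) / real t) \<longlonglongrightarrow> 0"
      by (rule sq_lemma[of T0]) (use a G_step in auto)
  qed
qed

end

lemma contraction:
  fixes J :: "nat set" and \<pi> \<nu> :: "nat \<Rightarrow> real" and \<epsilon> \<delta> \<eta> \<theta> :: real
  assumes fin: "finite J" and two: "\<And>j. j \<in> J \<Longrightarrow> \<exists>k\<in>J. k \<noteq> j"
    and ne: "J \<noteq> {}"
    and eps: "\<epsilon> > 0"
    and pige: "\<And>j. j \<in> J \<Longrightarrow> \<pi> j \<ge> \<epsilon>"
    and pisum: "(\<Sum>j\<in>J. \<pi> j) \<le> 1" and pisum2: "1 - (\<Sum>j\<in>J. \<pi> j) \<le> \<theta>"
    and nuge: "\<And>j. j \<in> J \<Longrightarrow> \<nu> j \<ge> 0" and nusum: "(\<Sum>j\<in>J. \<nu> j) \<le> 1"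
    and rel: "\<And>j. j \<in> J \<Longrightarrow> \<bar>\<nu> j - \<pi> j * (\<Sum>i\<in>J-{j}. \<nu> i / (1 - \<pi> i))\<bar> \<le> \<eta>"
    and delta: "0 < \<delta>" "\<delta> \<le> \<epsilon>^2/4"
    and small1: "real (card J) * \<eta> \<le> 1"
    and small2: "real (card J) * \<eta> + 2 * \<theta> / \<epsilon>^2 \<le> \<epsilon>/2"
    and j: "j \<in> J" and k: "k \<in> J"
  shows "(\<pi> j + \<delta> * \<nu> j)/(1+\<delta>) - (\<pi> k + \<delta> * \<nu> k)/(1+\<delta>)
     \<le> (Max (\<pi> ` J) - Min (\<pi> ` J)) * (1 - \<delta> * \<epsilon> / 4) + 2 * \<delta> * \<eta>"
proof -
  define s where "s = (\<Sum>j\<in>J. \<pi> j)"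
  define Mx where "Mx = Max (\<pi> ` J)"
  define Mn where "Mn = Min (\<pi> ` J)"
  have Mx: "\<And>j. j \<in> J \<Longrightarrow> \<pi> j \<le> Mx" "Mx \<in> \<pi> ` J" unfolding Mx_def using fin ne by auto
  have Mn: "\<And>j. j \<in> J \<Longrightarrow> Mn \<le> \<pi> j" "Mn \<in> \<pi> ` J" unfolding Mn_def using fin ne by auto
  have piup: "\<pi> i \<le> 1 - \<epsilon>" if i: "i \<in> J" for i
  proof -
    obtain k where k: "k \<in> J" "k \<noteq> i" using two[OF i] by blast
    have "\<pi> i + \<pi> k = (\<Sum>j\<in>{i,k}. \<pi> j)" using k by simp
    also have "\<dots> \<le> s" unfolding s_def using i k fin pige eps
      by (intro sum_mono2) (auto intro: order_trans[OF less_imp_le[OF eps]])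
    finally show ?thesis using pisum pige[OF k(1)] s_def by linarith
  qed
  have pinn: "\<pi> i \<ge> 0" if "i \<in> J" for i using pige[OF that] eps by linarith
  have pil1: "1 - \<pi> i > 0" if "i \<in> J" for i using piup[OF that] eps by linarith
  define S where "S = (\<Sum>i\<in>J. \<nu> i / (1 - \<pi> i))"
  define e where "e j = \<nu> j - \<pi> j * (\<Sum>i\<in>J-{j}. \<nu> i / (1 - \<pi> i))" for j
  have eb: "\<bar>e j\<bar> \<le> \<eta>" if "j \<in> J" for j using rel[OF that] unfolding e_def .
  have Snn: "S \<ge> 0" unfolding S_def using nuge pil1 by (intro sum_nonneg divide_nonneg_pos) auto
  have nurep: "\<nu> j = (1 - \<pi> j) * (\<pi> j * S + e j)" if j: "j \<in> J" for j
  proof -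
    have Ssplit: "S = \<nu> j / (1 - \<pi> j) + (\<Sum>i\<in>J-{j}. \<nu> i / (1 - \<pi> i))"
      unfolding S_def using fin j by (simp add: sum.remove)
    have eq: "e j = \<nu> j - \<pi> j * S + \<pi> j * (\<nu> j / (1 - \<pi> j))" unfolding e_def Ssplit by (simp add: algebra_simps)
    have c: "(\<nu> j / (1 - \<pi> j)) * (1 - \<pi> j) = \<nu> j" using pil1[OF j] by simp
    have "e j * (1 - \<pi> j) = \<nu> j * (1 - \<pi> j) - \<pi> j * S * (1 - \<pi> j) + \<pi> j * ((\<nu> j / (1 - \<pi> j)) * (1 - \<pi> j))"
      unfolding eq by (simp add: algebra_simps)
    also have "\<dots> = \<nu> j * (1 - \<pi> j) - \<pi> j * S * (1 - \<pi> j) + \<pi> j * \<nu> j" using c by simp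
    finally have "e j * (1 - \<pi> j) = \<nu> j - \<pi> j * S * (1 - \<pi> j)" by (simp add: algebra_simps)
    then have "\<nu> j = e j * (1 - \<pi> j) + \<pi> j * S * (1 - \<pi> j)" by linarith
    then show ?thesis by (simp add: algebra_simps)
  qed
  define Q where "Q = (\<Sum>i\<in>J. \<pi> i * (1 - \<pi> i))"
  have Qge: "Q \<ge> \<epsilon>^2"
  proof -
    obtain i where i: "i \<in> J" using ne by blast
    have "\<epsilon> * \<epsilon> \<le> \<pi> i * (1 - \<pi> i)"
    proof (rule mult_mono)
      show "\<epsilon> \<le> \<pi> i" using pige[OF i] .
      obtain k where k: "k \<in> J" "k \<noteq> i" using two[OF i] by blast
      have "\<pi> i + \<pi> k = (\<Sum>j\<in>{i,k}. \<pi> j)" using k by simp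
      also have "\<dots> \<le> s" unfolding s_def using i k fin pinn by (intro sum_mono2) auto
      finally show "\<epsilon> \<le> 1 - \<pi> i" using pisum pige[OF k(1)] s_def by linarith
    qed (use eps pinn[OF i] in auto)
    also have "\<dots> \<le> Q" unfolding Q_def using fin i
      by (intro member_le_sum) (auto intro!: mult_nonneg_nonneg pinn less_imp_le[OF pil1])
    finally show ?thesis by (simp add: power2_eq_square)
  qed
  have "\<epsilon>^2 > 0" using eps by simp
  then have Qpos: "Q > 0" using Qge by linarith
  have sumnu: "(\<Sum>j\<in>J. \<nu> j) = S * Q + (\<Sum>j\<in>J. (1 - \<pi> j) * e j)"
  proof -
    have "(\<Sum>j\<in>J. \<nu> j) = (\<Sum>j\<in>J. S * (\<pi> j * (1 - \<pi> j)) + (1 - \<pi> j) * e j)"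
      using nurep by (intro sum.cong) (auto simp: algebra_simps)
    then show ?thesis unfolding Q_def by (simp add: sum.distrib sum_distrib_left)
  qed
  have sume: "\<bar>\<Sum>j\<in>J. (1 - \<pi> j) * e j\<bar> \<le> real (card J) * \<eta>"
  proof -
    have "\<bar>\<Sum>j\<in>J. (1 - \<pi> j) * e j\<bar> \<le> (\<Sum>j\<in>J. \<bar>(1 - \<pi> j) * e j\<bar>)" by (rule sum_abs)
    also have "\<dots> \<le> (\<Sum>j\<in>J. \<eta>)"
    proof (intro sum_mono)
      fix j assume j: "j \<in> J"
      have "\<bar>(1 - \<pi> j) * e j\<bar> = (1 - \<pi> j) * \<bar>e j\<bar>" using pil1[OF j] by (simp add: abs_mult)
      also have "\<dots> \<le> 1 * \<eta>" using eb[OF j] pinn[OF j] pil1[OF j]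
        by (intro mult_mono) auto
      finally show "\<bar>(1 - \<pi> j) * e j\<bar> \<le> \<eta>" by simp
    qed
    finally show ?thesis by simp
  qed
  have SQ: "S * Q \<le> 1 + real (card J) * \<eta>" using sumnu sume nusum by linarith
  have Sle: "S \<le> 2 / \<epsilon>^2"
  proof -
    have "S * \<epsilon>^2 \<le> S * Q" using Snn Qge by (intro mult_left_mono) auto
    then have "S * \<epsilon>^2 \<le> 2" using SQ small1 by linarith
    then show ?thesis using eps by (simp add: field_simps)
  qed
  have dS: "\<delta> * S \<le> 1/2"
  proof -
    have "\<delta> * S \<le> (\<epsilon>^2/4) * (2/\<epsilon>^2)" using delta Sle Snn by (intro mult_mono) auto
    also have "\<dots> = 1/2" using eps by simp
    finally show ?thesis .
  qed
  define f where "f x = x + \<delta> * S * x * (1 - x)" for x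
  have fdiff: "f y - f x = (y - x) * (1 + \<delta> * S * (1 - x - y))" for x y
    unfolding f_def by (simp add: algebra_simps)
  have fmono: "f x \<le> f y" if "0 \<le> x" "x \<le> y" "y \<le> 1" for x y
  proof -
    have "1 + \<delta> * S * (1 - x - y) \<ge> 0"
    proof -
      have "\<delta> * S * (1 - x - y) \<ge> \<delta> * S * (-1)" using that delta Snn
        by (intro mult_left_mono) auto
      then show ?thesis using dS by linarith
    qed
    then have "(y - x) * (1 + \<delta> * S * (1 - x - y)) \<ge> 0" using that by (intro mult_nonneg_nonneg) auto
    then show ?thesis using fdiff[of y x] by linarith
  qed
  have piprime: "\<pi> i + \<delta> * \<nu> i = f (\<pi> i) + \<delta> * ((1 - \<pi> i) * e i)" if "i \<in> J" for i
    unfolding f_def nurep[OF that] by (simp add: algebra_simps)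
  have MxJ: "Mx \<le> 1" "Mx \<ge> 0" and MnJ: "Mn \<ge> \<epsilon>" "Mn \<le> Mx"
    using Mx Mn piup pinn pige eps by force+
  have eps1: "\<epsilon> \<le> 1" using MxJ MnJ by linarith
  have eta0: "\<eta> \<ge> 0" using eb[OF j] by linarith
  have ej1: "\<bar>(1 - \<pi> i) * e i\<bar> \<le> \<eta>" if "i \<in> J" for i
  proof -
    have "\<bar>(1 - \<pi> i) * e i\<bar> = (1 - \<pi> i) * \<bar>e i\<bar>" using pil1[OF that] by (simp add: abs_mult)
    also have "\<dots> \<le> 1 * \<eta>" using eb[OF that] pinn[OF that] pil1[OF that] by (intro mult_mono) auto
    finally show ?thesis by simp
  qed
  have keyineq: "1 - Mx - Mn \<le> (1 - \<epsilon>) * Q + (1 - s)"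
  proof -
    have sq: "(\<Sum>i\<in>J. \<pi> i ^ 2) \<le> Mx * s"
    proof -
      have "(\<Sum>i\<in>J. \<pi> i ^ 2) \<le> (\<Sum>i\<in>J. Mx * \<pi> i)"
        using Mx pinn by (intro sum_mono) (auto simp: power2_eq_square intro: mult_right_mono)
      then show ?thesis unfolding s_def by (simp add: sum_distrib_left)
    qed
    have Qeq: "Q = s - (\<Sum>i\<in>J. \<pi> i ^ 2)" unfolding Q_def s_def
      by (simp add: algebra_simps power2_eq_square sum_subtractf)
    have s0: "s \<ge> 0" unfolding s_def using pinn by (intro sum_nonneg) auto
    have s1: "s \<le> 1" using pisum s_def by simp
    have "Mn \<ge> \<epsilon> * s * (1 - Mx)"
    proof -
      have "\<epsilon> * s * (1 - Mx) \<le> \<epsilon> * 1 * 1" using eps s0 s1 MxJ by (intro mult_mono) auto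
      then show ?thesis using MnJ by linarith
    qed
    moreover have "Mx \<ge> Mx * s" using MxJ s1 by (simp add: mult_left_le)
    moreover have "(1 - \<epsilon>) * Q \<ge> (1 - \<epsilon>) * (s - Mx * s)"
    proof (cases "\<epsilon> \<le> 1")
      case True then show ?thesis using Qeq sq by (intro mult_left_mono) auto
    next
      case False
      then show ?thesis using MnJ MxJ by linarith
    qed
    moreover have "(1 - \<epsilon>) * (s - Mx * s) = s - Mx * s - \<epsilon> * s * (1 - Mx)" by (simp add: algebra_simps)
    ultimately show ?thesis by linarith
  qed
  have theta0: "0 \<le> 1 - s" using pisum s_def by simp
  have SB: "S * (1 - Mx - Mn) \<le> 1 - \<epsilon>/2"
  proof -
    have "S * (1 - Mx - Mn) \<le> S * ((1 - \<epsilon>) * Q + (1 - s))" using keyineq Snn by (intro mult_left_mono) auto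
    also have "\<dots> = (1 - \<epsilon>) * (S * Q) + S * (1 - s)" by (simp add: algebra_simps)
    also have "\<dots> \<le> (1 - \<epsilon>) * (1 + real (card J) * \<eta>) + (2/\<epsilon>^2) * \<theta>"
    proof (intro add_mono)
      show "S * (1 - s) \<le> (2/\<epsilon>^2) * \<theta>" using Sle Snn theta0 pisum2 s_def by (intro mult_mono) auto
      show "(1 - \<epsilon>) * (S * Q) \<le> (1 - \<epsilon>) * (1 + real (card J) * \<eta>)"
      proof (cases "\<epsilon> \<le> 1")
        case True then show ?thesis using SQ by (intro mult_left_mono) auto
      next
        case False
        then show ?thesis using MnJ MxJ by linarith
      qed
    qed
    also have "\<dots> \<le> 1 - \<epsilon> + real (card J) * \<eta> + 2 * \<theta> / \<epsilon>^2"
    proof -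
      have "(1 - \<epsilon>) * (real (card J) * \<eta>) \<le> real (card J) * \<eta>"
        using eps eps1 eta0 by (intro mult_left_le_one_le) auto
      then show ?thesis by (simp add: algebra_simps)
    qed
    also have "\<dots> \<le> 1 - \<epsilon>/2" using small2 by linarith
    finally show ?thesis .
  qed
  have fMm: "f Mx - f Mn \<le> (Mx - Mn) * (1 + \<delta> * (1 - \<epsilon>/2))"
  proof -
    have "f Mx - f Mn = (Mx - Mn) * (1 + \<delta> * (S * (1 - Mn - Mx)))" using fdiff[of Mn Mx] by (simp add: algebra_simps)
    also have "\<dots> \<le> (Mx - Mn) * (1 + \<delta> * (1 - \<epsilon>/2))"
      using SB MnJ delta by (intro mult_left_mono add_left_mono) (auto simp: algebra_simps)
    finally show ?thesis .
  qed
  have "(\<pi> j + \<delta> * \<nu> j) - (\<pi> k + \<delta> * \<nu> k) \<le> (f Mx - f Mn) + 2 * \<delta> * \<eta>"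
  proof -
    have "f (\<pi> j) \<le> f Mx" using Mx(1)[OF j] pinn[OF j] MxJ by (intro fmono) auto
    moreover have "f Mn \<le> f (\<pi> k)" using Mn(1)[OF k] MnJ eps piup[OF k] by (intro fmono) auto
    moreover have "\<delta> * ((1 - \<pi> j) * e j) \<le> \<delta> * \<eta>" using ej1[OF j] delta by (intro mult_left_mono) auto
    moreover have "- (\<delta> * ((1 - \<pi> k) * e k)) \<le> \<delta> * \<eta>"
    proof -
      have "- \<eta> \<le> (1 - \<pi> k) * e k" using ej1[OF k] by linarith
      then have "\<delta> * (- \<eta>) \<le> \<delta> * ((1 - \<pi> k) * e k)" using delta by (intro mult_left_mono) auto
      then show ?thesis by simp
    qed
    ultimately show ?thesis using piprime[OF j] piprime[OF k] by linarith
  qed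
  also have "\<dots> \<le> (Mx - Mn) * (1 + \<delta> * (1 - \<epsilon>/2)) + 2 * \<delta> * \<eta>" using fMm by linarith
  finally have A: "(\<pi> j + \<delta> * \<nu> j) - (\<pi> k + \<delta> * \<nu> k) \<le> (Mx - Mn) * (1 + \<delta> * (1 - \<epsilon>/2)) + 2 * \<delta> * \<eta>" .
  have "(\<pi> j + \<delta> * \<nu> j)/(1+\<delta>) - (\<pi> k + \<delta> * \<nu> k)/(1+\<delta>) = ((\<pi> j + \<delta> * \<nu> j) - (\<pi> k + \<delta> * \<nu> k))/(1+\<delta>)"
    by (simp add: diff_divide_distrib)
  also have "\<dots> \<le> ((Mx - Mn) * (1 + \<delta> * (1 - \<epsilon>/2)) + 2 * \<delta> * \<eta>)/(1+\<delta>)"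
    using A delta by (intro divide_right_mono) auto
  also have "\<dots> \<le> (Mx - Mn) * (1 - \<delta> * \<epsilon> / 4) + 2 * \<delta> * \<eta>"
  proof -
    have "\<epsilon>^2 \<le> 1" using eps eps1 by (simp add: power_le_one)
    then have d1: "\<delta> \<le> 1" using delta by linarith
    have m1: "(Mx - Mn) * (1 + \<delta> * (1 - \<epsilon>/2)) \<le> (Mx - Mn) * (1 - \<delta> * \<epsilon> / 4) * (1 + \<delta>)"
    proof -
      have "1 + \<delta> * (1 - \<epsilon>/2) \<le> (1 - \<delta> * \<epsilon> / 4) * (1 + \<delta>)"
      proof -
        have "(1 - \<delta> * \<epsilon> / 4) * (1 + \<delta>) = 1 + \<delta> - \<delta>*\<epsilon>/4 - \<delta>*\<delta>*\<epsilon>/4" by (simp add: algebra_simps)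
        moreover have "\<delta>*\<delta>*\<epsilon>/4 \<le> \<delta>*\<epsilon>/4" using d1 delta eps by (simp add: mult_left_le)
        ultimately show ?thesis by (simp add: algebra_simps)
      qed
      then show ?thesis using MnJ by (simp add: mult.assoc mult_left_mono)
    qed
    have m2: "2 * \<delta> * \<eta> \<le> 2 * \<delta> * \<eta> * (1 + \<delta>)"
    proof -
      have x0: "0 \<le> 2 * \<delta> * \<eta>" using delta eta0 by simp
      have "2 * \<delta> * \<eta> * 1 \<le> 2 * \<delta> * \<eta> * (1 + \<delta>)" using x0 delta by (intro mult_left_mono) auto
      then show ?thesis by simp
    qed
    have "(Mx - Mn) * (1 + \<delta> * (1 - \<epsilon>/2)) + 2 * \<delta> * \<eta> \<le> ((Mx - Mn) * (1 - \<delta> * \<epsilon> / 4) + 2 * \<delta> * \<eta>) * (1 + \<delta>)"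
    proof -
      have "((Mx - Mn) * (1 - \<delta> * \<epsilon> / 4) + 2 * \<delta> * \<eta>) * (1 + \<delta>) = (Mx - Mn) * (1 - \<delta> * \<epsilon> / 4) * (1 + \<delta>) + 2 * \<delta> * \<eta> * (1 + \<delta>)"
        by (simp add: algebra_simps)
      then show ?thesis using m1 m2 by linarith
    qed
    then show ?thesis using delta by (simp add: divide_le_eq)
  qed
  finally show ?thesis unfolding Mx_def Mn_def .
qed

locale detsys =
  fixes d :: nat and \<epsilon> :: real and T :: nat and N :: "nat \<Rightarrow> nat \<Rightarrow> real"
    and Mg :: "nat \<Rightarrow> nat \<Rightarrow> real" and K :: real
  assumes d2: "d \<ge> 2" and eps: "\<epsilon> > 0" and T1: "T \<ge> 1" and K0: "K \<ge> 0"
    and H1: "\<And>t j. t \<ge> T \<Longrightarrow> j \<in> {1..d} \<Longrightarrow> N j t \<ge> \<epsilon> * real t"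
    and H2a: "\<And>t. t \<ge> T \<Longrightarrow> (\<Sum>j\<in>{1..d}. N j t) \<le> real t"
    and H2b: "\<And>t. t \<ge> T \<Longrightarrow> real t - (\<Sum>j\<in>{1..d}. N j t) \<le> K * real t powr (1 - \<epsilon>)"
    and H3: "\<And>t j. t \<ge> T \<Longrightarrow> j \<in> {1..d} \<Longrightarrow> 0 \<le> N j (Suc t) - N j t \<and> N j (Suc t) - N j t \<le> 1"
    and H3b: "\<And>t. t \<ge> T \<Longrightarrow> (\<Sum>j\<in>{1..d}. N j (Suc t)) - (\<Sum>j\<in>{1..d}. N j t) \<le> 1"
    and H4: "\<And>a t j. T < a \<Longrightarrow> a \<le> t \<Longrightarrow> j \<in> {1..d} \<Longrightarrow>
       \<bar>N j t - N j a - (\<Sum>s\<in>{a..<t}. \<Sum>i\<in>{1..d}-{j}. (N i s - N i (s-1)) * (N j s / (real s - N i s)))\<bar>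
       \<le> \<bar>Mg j t - Mg j a\<bar> + (real t - (\<Sum>j\<in>{1..d}. N j t)) + (\<Sum>s\<in>{a..<t}. (real s - (\<Sum>j\<in>{1..d}. N j s)) / (\<epsilon> * real s))"
    and H5: "\<And>j. j \<in> {1..d} \<Longrightarrow> (\<lambda>t. Mg j t / real t) \<longlonglongrightarrow> 0"
begin

abbreviation "J \<equiv> {1..d}"
definition L :: "nat \<Rightarrow> real" where "L t = real t - (\<Sum>j\<in>J. N j t)"
definition pi :: "nat \<Rightarrow> nat \<Rightarrow> real" where "pi t j = N j t / real t"
definition R :: "nat \<Rightarrow> real" where "R t = Max (pi t ` J) - Min (pi t ` J)"

lemma Jfin: "finite J" and Jne: "J \<noteq> {}" and Jcard: "card J = d" using d2 by auto

lemma Jtwo: "j \<in> J \<Longrightarrow> \<exists>k\<in>J. k \<noteq> j"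
proof -
  assume j: "j \<in> J"
  show ?thesis
  proof (cases "j = 1")
    case True then show ?thesis using d2 by (intro bexI[of _ 2]) auto
  next
    case False then show ?thesis using d2 by (intro bexI[of _ 1]) auto
  qed
qed

lemma L_nonneg: "t \<ge> T \<Longrightarrow> L t \<ge> 0" using H2a unfolding L_def by simp
lemma L_bound: "t \<ge> T \<Longrightarrow> L t \<le> K * real t powr (1 - \<epsilon>)" using H2b unfolding L_def by simp

lemma N_nonneg: "t \<ge> T \<Longrightarrow> j \<in> J \<Longrightarrow> N j t \<ge> 0"
  using H1[of t j] eps by (smt (verit) mult_nonneg_nonneg of_nat_0_le_iff)

lemma N_mono: assumes "T \<le> a" "a \<le> t" "j \<in> J" shows "0 \<le> N j t - N j a \<and> N j t - N j a \<le> real t - real a"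
  using assms(2)
proof (induction t rule: dec_induct)
  case base then show ?case by simp
next
  case (step t)
  then show ?case using H3[of t j] assms by auto
qed

lemma L_mono: assumes "T \<le> a" "a \<le> t" shows "L a \<le> L t"
  using assms(2)
proof (induction t rule: dec_induct)
  case base then show ?case by simp
next
  case (step t)
  then show ?case using H3b[of t] assms unfolding L_def by auto
qed

lemma gap: assumes "t \<ge> T" "i \<in> J" shows "real t - N i t \<ge> \<epsilon> * real t"
proof -
  obtain k where k: "k \<in> J" "k \<noteq> i" using Jtwo[OF assms(2)] by blast
  have "N i t + N k t = (\<Sum>j\<in>{i,k}. N j t)" using k by simp
  also have "\<dots> \<le> (\<Sum>j\<in>J. N j t)"
    by (rule sum_mono2[OF Jfin]) (use k assms(2) N_nonneg[OF assms(1)] in auto)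
  also have "\<dots> \<le> real t" using H2a assms by simp
  finally show ?thesis using H1[OF assms(1) k(1)] by linarith
qed

lemma pair_le: assumes "t \<ge> T" "i \<in> J" "j \<in> J" "i \<noteq> j" shows "N j t \<le> real t - N i t"
proof -
  have "N i t + N j t = (\<Sum>k\<in>{i,j}. N k t)" using assms by simp
  also have "\<dots> \<le> (\<Sum>k\<in>J. N k t)"
    by (rule sum_mono2[OF Jfin]) (use assms(2,3) N_nonneg[OF assms(1)] in auto)
  also have "\<dots> \<le> real t" using H2a assms by simp
  finally show ?thesis by linarith
qed

lemma ratio_bound:
  assumes a: "T \<le> a" "1 \<le> a" "a \<le> s" and ij: "i \<in> J" "j \<in> J" "i \<noteq> j"
  shows "\<bar>N j s / (real s - N i s) - N j a / (real a - N i a)\<bar> \<le> 2 * (real s - real a) / (\<epsilon> * real a)"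
proof -
  define x where "x = N j s"
  define y where "y = real s - N i s"
  define x' where "x' = N j a"
  define y' where "y' = real a - N i a"
  have ea: "\<epsilon> * real a > 0" using eps a by simp
  have y'ge: "y' \<ge> \<epsilon> * real a" unfolding y'_def using gap a ij by simp
  have mi: "0 \<le> N i s - N i a \<and> N i s - N i a \<le> real s - real a" using N_mono[OF a(1) a(3) ij(1)] .
  have mj: "0 \<le> N j s - N j a \<and> N j s - N j a \<le> real s - real a" using N_mono[OF a(1) a(3) ij(2)] .
  have yy: "y \<ge> y'" "y - y' \<le> real s - real a" using mi unfolding y_def y'_def by auto
  have xx: "\<bar>x - x'\<bar> \<le> real s - real a" using mj unfolding x_def x'_def by auto
  have x'0: "0 \<le> x'" "x' \<le> y'" unfolding x'_def y'_def using N_nonneg pair_le a ij by auto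
  have y'0: "y' > 0" using y'ge ea by linarith
  have y0: "y > 0" using yy y'0 by linarith
  have sa: "real s - real a \<ge> 0" using a by simp
  have eq: "x / y - x' / y' = ((x - x') * y' - x' * (y - y')) / (y * y')"
    using y0 y'0 by (simp add: field_simps)
  have num: "\<bar>(x - x') * y' - x' * (y - y')\<bar> \<le> 2 * (real s - real a) * y'"
  proof -
    have "\<bar>(x - x') * y' - x' * (y - y')\<bar> \<le> \<bar>x - x'\<bar> * y' + x' * (y - y')"
    proof -
      have e1: "\<bar>(x - x') * y'\<bar> = \<bar>x - x'\<bar> * y'" using y'0 by (simp add: abs_mult)
      have e2: "\<bar>x' * (y - y')\<bar> = x' * (y - y')" using x'0 yy by (simp add: abs_mult)
      show ?thesis using abs_triangle_ineq4[of "(x - x') * y'" "x' * (y - y')"] e1 e2 by linarith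
    qed
    also have "\<dots> \<le> (real s - real a) * y' + y' * (real s - real a)"
      using xx y'0 x'0 yy sa by (intro add_mono mult_mono) auto
    finally show ?thesis by (simp add: algebra_simps)
  qed
  have "\<bar>x / y - x' / y'\<bar> = \<bar>(x - x') * y' - x' * (y - y')\<bar> / (y * y')"
    unfolding eq using y0 y'0 by (simp add: abs_divide)
  also have "\<dots> \<le> 2 * (real s - real a) * y' / (y * y')"
    using num y0 y'0 by (intro divide_right_mono) auto
  also have "\<dots> = 2 * (real s - real a) / y" using y'0 by simp
  also have "\<dots> \<le> 2 * (real s - real a) / (\<epsilon> * real a)"
    using sa y'ge yy ea by (intro divide_left_mono) auto
  finally show ?thesis unfolding x_def y_def x'_def y'_def .
qed

lemma tele: assumes "1 \<le> a" "a \<le> b"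
  shows "(\<Sum>s\<in>{a..<b}. N i s - N i (s-1)) = N i (b-1) - N i (a-1)"
  using assms(2)
proof (induction b rule: dec_induct)
  case base then show ?case by simp
next
  case (step b)
  have "{a..<Suc b} = insert b {a..<b}" using step by auto
  moreover have "Suc b - 1 = Suc (b - 1)" using step assms by simp
  moreover have "b = Suc (b - 1)" using step assms by simp
  ultimately show ?case using step(3) by (simp add: algebra_simps)
qed

definition cc :: "nat \<Rightarrow> nat \<Rightarrow> nat \<Rightarrow> real" where "cc i j a = N j a / (real a - N i a)"

lemma cc_bounds: assumes "T \<le> a" "1 \<le> a" "i \<in> J" "j \<in> J" "i \<noteq> j" shows "0 \<le> cc i j a" "cc i j a \<le> 1"
proof -
  have "\<epsilon> * real a > 0" using eps assms(2) by simp
  then have p: "real a - N i a > 0" using gap[of a i] assms by linarith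
  show "0 \<le> cc i j a" unfolding cc_def using N_nonneg[of a j] assms p by simp
  show "cc i j a \<le> 1" unfolding cc_def using pair_le[of a i j] assms p by simp
qed

lemma block_C:
  assumes a: "T < a" "a \<le> b" and j: "j \<in> J"
  shows "\<bar>(N j b - N j a) - (\<Sum>i\<in>J-{j}. cc i j a * (N i b - N i a))\<bar>
     \<le> \<bar>Mg j b - Mg j a\<bar> + L b + (\<Sum>s\<in>{a..<b}. L s / (\<epsilon> * real s))
        + real d * (2 * (real b - real a)^2 / (\<epsilon> * real a) + 1)"
proof -
  have a1: "1 \<le> a" "T \<le> a" using a T1 by auto
  define v where "v i s = N i s - N i (s-1)" for i s
  define x where "x i s = N j s / (real s - N i s)" for i s
  have vb: "0 \<le> v i s \<and> v i s \<le> 1" if "i \<in> J" "a \<le> s" for i s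
  proof -
    have "T \<le> s - 1" using a that by auto
    moreover have "Suc (s - 1) = s" using a that by auto
    ultimately show ?thesis using H3[of "s-1" i] that unfolding v_def by auto
  qed
  define Sg where "Sg = (\<Sum>s\<in>{a..<b}. \<Sum>i\<in>J-{j}. v i s * x i s)"
  have H: "\<bar>N j b - N j a - Sg\<bar> \<le> \<bar>Mg j b - Mg j a\<bar> + L b + (\<Sum>s\<in>{a..<b}. L s / (\<epsilon> * real s))"
    using H4[OF a j] unfolding Sg_def v_def x_def L_def by simp
  have each: "\<bar>(\<Sum>s\<in>{a..<b}. v i s * x i s) - cc i j a * (N i b - N i a)\<bar>
       \<le> 2 * (real b - real a)^2 / (\<epsilon> * real a) + 1" if i: "i \<in> J-{j}" for i
  proof -
    have iJ: "i \<in> J" "i \<noteq> j" using i by auto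
    have c01: "0 \<le> cc i j a" "cc i j a \<le> 1" using cc_bounds[OF a1(2) a1(1) iJ(1) j iJ(2)] by auto
    have split: "(\<Sum>s\<in>{a..<b}. v i s * x i s) - cc i j a * (N i b - N i a)
       = (\<Sum>s\<in>{a..<b}. v i s * (x i s - cc i j a)) + cc i j a * ((\<Sum>s\<in>{a..<b}. v i s) - (N i b - N i a))"
      by (simp add: algebra_simps sum_subtractf sum_distrib_left sum_distrib_right)
    have A: "\<bar>\<Sum>s\<in>{a..<b}. v i s * (x i s - cc i j a)\<bar> \<le> 2 * (real b - real a)^2 / (\<epsilon> * real a)"
    proof -
      have "\<bar>\<Sum>s\<in>{a..<b}. v i s * (x i s - cc i j a)\<bar> \<le> (\<Sum>s\<in>{a..<b}. \<bar>v i s * (x i s - cc i j a)\<bar>)"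
        by (rule sum_abs)
      also have "\<dots> \<le> (\<Sum>s\<in>{a..<b}. 2 * (real b - real a) / (\<epsilon> * real a))"
      proof (intro sum_mono)
        fix s assume s: "s \<in> {a..<b}"
        have r: "\<bar>x i s - cc i j a\<bar> \<le> 2 * (real s - real a) / (\<epsilon> * real a)"
          unfolding x_def cc_def using ratio_bound[of a s i j] a1 s iJ j by auto
        also have "\<dots> \<le> 2 * (real b - real a) / (\<epsilon> * real a)"
          using s eps a1 by (intro divide_right_mono) auto
        finally have r2: "\<bar>x i s - cc i j a\<bar> \<le> 2 * (real b - real a) / (\<epsilon> * real a)" .
        have v1: "\<bar>v i s\<bar> \<le> 1" using vb[OF iJ(1), of s] s by auto
        have "\<bar>v i s * (x i s - cc i j a)\<bar> = \<bar>v i s\<bar> * \<bar>x i s - cc i j a\<bar>" by (rule abs_mult)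
        also have "\<dots> \<le> 1 * \<bar>x i s - cc i j a\<bar>" by (rule mult_right_mono[OF v1 abs_ge_zero])
        finally show "\<bar>v i s * (x i s - cc i j a)\<bar> \<le> 2 * (real b - real a) / (\<epsilon> * real a)" using r2 by simp
      qed
      also have "\<dots> = (real b - real a) * (2 * (real b - real a) / (\<epsilon> * real a))"
        using a by (simp add: of_nat_diff)
      also have "\<dots> = 2 * (real b - real a)^2 / (\<epsilon> * real a)" by (simp add: power2_eq_square)
      finally show ?thesis .
    qed
    have B: "\<bar>cc i j a * ((\<Sum>s\<in>{a..<b}. v i s) - (N i b - N i a))\<bar> \<le> 1"
    proof -
      have t: "(\<Sum>s\<in>{a..<b}. v i s) = N i (b-1) - N i (a-1)" unfolding v_def using tele a1 a by simp
      have vb1: "0 \<le> v i b \<and> v i b \<le> 1" "0 \<le> v i a \<and> v i a \<le> 1" using vb[OF iJ(1)] a by auto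
      have "\<bar>(\<Sum>s\<in>{a..<b}. v i s) - (N i b - N i a)\<bar> \<le> 1"
        using vb1 t unfolding v_def by (auto simp: abs_le_iff)
      then have "\<bar>cc i j a\<bar> * \<bar>(\<Sum>s\<in>{a..<b}. v i s) - (N i b - N i a)\<bar> \<le> 1 * 1"
        using c01 by (intro mult_mono) auto
      then show ?thesis by (simp add: abs_mult)
    qed
    show ?thesis unfolding split using A B by linarith
  qed
  have C: "\<bar>Sg - (\<Sum>i\<in>J-{j}. cc i j a * (N i b - N i a))\<bar> \<le> real d * (2 * (real b - real a)^2 / (\<epsilon> * real a) + 1)"
  proof -
    have "Sg = (\<Sum>i\<in>J-{j}. \<Sum>s\<in>{a..<b}. v i s * x i s)" unfolding Sg_def by (rule sum.swap)
    then have "\<bar>Sg - (\<Sum>i\<in>J-{j}. cc i j a * (N i b - N i a))\<bar>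
       = \<bar>\<Sum>i\<in>J-{j}. ((\<Sum>s\<in>{a..<b}. v i s * x i s) - cc i j a * (N i b - N i a))\<bar>"
      by (simp add: sum_subtractf)
    also have "\<dots> \<le> (\<Sum>i\<in>J-{j}. \<bar>(\<Sum>s\<in>{a..<b}. v i s * x i s) - cc i j a * (N i b - N i a)\<bar>)"
      by (rule sum_abs)
    also have "\<dots> \<le> (\<Sum>i\<in>J-{j}. 2 * (real b - real a)^2 / (\<epsilon> * real a) + 1)"
      using each by (intro sum_mono) auto
    also have "\<dots> = real (card (J-{j})) * (2 * (real b - real a)^2 / (\<epsilon> * real a) + 1)" by simp
    also have "\<dots> \<le> real d * (2 * (real b - real a)^2 / (\<epsilon> * real a) + 1)"
    proof (intro mult_right_mono)
      have "card (J - {j}) \<le> card J" by (rule card_mono) auto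
      then show "real (card (J-{j})) \<le> real d" by simp
      show "0 \<le> 2 * (real b - real a)^2 / (\<epsilon> * real a) + 1" using eps by (simp add: add_nonneg_nonneg)
    qed
    finally show ?thesis .
  qed
  show ?thesis using H C by linarith
qed

end

context detsys begin

definition Eb :: "nat \<Rightarrow> nat \<Rightarrow> nat \<Rightarrow> real" where
  "Eb j a b = \<bar>Mg j b - Mg j a\<bar> + L b + (\<Sum>s\<in>{a..<b}. L s / (\<epsilon> * real s))
        + real d * (2 * (real b - real a)^2 / (\<epsilon> * real a) + 1)"

lemma pi_ge: "t \<ge> T \<Longrightarrow> j \<in> J \<Longrightarrow> pi t j \<ge> \<epsilon>"
  using H1[of t j] T1 unfolding pi_def by (simp add: field_simps)

lemma pi_sum: "t \<ge> T \<Longrightarrow> (\<Sum>j\<in>J. pi t j) = 1 - L t / real t"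
proof -
  assume t: "t \<ge> T"
  have tp: "real t > 0" using t T1 by simp
  have "(\<Sum>j\<in>J. pi t j) = (\<Sum>j\<in>J. N j t) / real t" unfolding pi_def by (simp add: sum_divide_distrib)
  also have "\<dots> = (real t - L t) / real t" unfolding L_def by simp
  also have "\<dots> = 1 - L t / real t" using tp by (simp add: field_simps)
  finally show ?thesis .
qed

lemma R_attained: "\<exists>j\<in>J. \<exists>k\<in>J. R t = pi t j - pi t k"
proof -
  have "Max (pi t ` J) \<in> pi t ` J" "Min (pi t ` J) \<in> pi t ` J" using Jfin Jne by auto
  then obtain j k where jk: "j \<in> J" "Max (pi t ` J) = pi t j" "k \<in> J" "Min (pi t ` J) = pi t k" by auto
  then have "R t = pi t j - pi t k" unfolding R_def by simp
  then show ?thesis using jk(1,3) by blast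
qed

lemma R_ge: "j \<in> J \<Longrightarrow> k \<in> J \<Longrightarrow> pi t j - pi t k \<le> R t"
proof -
  assume jk: "j \<in> J" "k \<in> J"
  have "pi t j \<le> Max (pi t ` J)" "Min (pi t ` J) \<le> pi t k" using Jfin jk by auto
  then show ?thesis unfolding R_def by linarith
qed

lemma R_nonneg: "R t \<ge> 0"
proof -
  obtain j where "j \<in> J" using Jne by blast
  then show ?thesis using R_ge[of j j t] by simp
qed

lemma block_contract:
  assumes a: "T < a" and D: "D \<ge> 1" and b: "b = a + D"
    and eta: "\<And>j. j \<in> J \<Longrightarrow> Eb j a b \<le> \<eta> * real D"
    and theta: "L a / real a \<le> \<theta>"
    and dl: "real D / real a \<le> \<epsilon>^2/4"
    and small1: "real d * \<eta> \<le> 1" and small2: "real d * \<eta> + 2*\<theta>/\<epsilon>^2 \<le> \<epsilon>/2"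
  shows "R b \<le> R a * (1 - (real D / real a) * \<epsilon> / 4) + 2 * (real D / real a) * \<eta>"
proof -
  have a1: "1 \<le> a" "T \<le> a" using a T1 by auto
  have ap: "real a > 0" using a1 by simp
  have Dp: "real D > 0" using D by simp
  have ab: "a \<le> b" using b by simp
  define \<nu> where "\<nu> j = (N j b - N j a) / real D" for j
  define \<delta> where "\<delta> = real D / real a"
  have dpos: "\<delta> > 0" unfolding \<delta>_def using ap Dp by simp
  have rb: "real b - real a = real D" using b by simp
  have gp: "real a - N i a > 0" if "i \<in> J" for i
  proof -
    have "\<epsilon> * real a > 0" using eps ap by simp
    then show ?thesis using gap[OF a1(2) that] by linarith
  qed
  have key: "(pi a j + \<delta> * \<nu> j) / (1 + \<delta>) = pi b j" for j
    unfolding pi_def \<nu>_def \<delta>_def using ap Dp b by (simp add: field_simps)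
  have rel: "\<bar>\<nu> j - pi a j * (\<Sum>i\<in>J-{j}. \<nu> i / (1 - pi a i))\<bar> \<le> \<eta>" if j: "j \<in> J" for j
  proof -
    have trm: "pi a j * (\<nu> i / (1 - pi a i)) = cc i j a * (N i b - N i a) / real D" if "i \<in> J" for i
    proof -
      have g: "real a - N i a > 0" using gp[OF that] .
      have "1 - pi a i = (real a - N i a) / real a" unfolding pi_def using ap by (simp add: field_simps)
      then show ?thesis unfolding pi_def \<nu>_def cc_def using ap Dp g by (simp add: field_simps)
    qed
    have "pi a j * (\<Sum>i\<in>J-{j}. \<nu> i / (1 - pi a i)) = (\<Sum>i\<in>J-{j}. cc i j a * (N i b - N i a)) / real D"
      using trm by (simp add: sum_distrib_left sum_divide_distrib)
    then have "\<nu> j - pi a j * (\<Sum>i\<in>J-{j}. \<nu> i / (1 - pi a i))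
        = ((N j b - N j a) - (\<Sum>i\<in>J-{j}. cc i j a * (N i b - N i a))) / real D"
      unfolding \<nu>_def by (simp add: diff_divide_distrib)
    then have "\<bar>\<nu> j - pi a j * (\<Sum>i\<in>J-{j}. \<nu> i / (1 - pi a i))\<bar>
        = \<bar>(N j b - N j a) - (\<Sum>i\<in>J-{j}. cc i j a * (N i b - N i a))\<bar> / real D"
      using Dp by (simp add: abs_divide)
    also have "\<dots> \<le> Eb j a b / real D"
      unfolding Eb_def using block_C[OF a ab j] Dp by (intro divide_right_mono) auto
    also have "\<dots> \<le> \<eta>" using eta[OF j] Dp by (simp add: divide_le_eq)
    finally show ?thesis .
  qed
  have nuge: "\<nu> j \<ge> 0" if "j \<in> J" for j unfolding \<nu>_def using N_mono[OF a1(2) ab that] Dp by simp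
  have nusum: "(\<Sum>j\<in>J. \<nu> j) \<le> 1"
  proof -
    have "L a \<le> L b" using L_mono[OF a1(2) ab] .
    then have "(\<Sum>j\<in>J. N j b) - (\<Sum>j\<in>J. N j a) \<le> real D" unfolding L_def using rb by linarith
    then have "(\<Sum>j\<in>J. N j b - N j a) \<le> real D" by (simp add: sum_subtractf)
    then show ?thesis unfolding \<nu>_def using Dp by (simp add: sum_divide_distrib[symmetric] divide_le_eq)
  qed
  have pisum: "(\<Sum>j\<in>J. pi a j) \<le> 1" using pi_sum[OF a1(2)] L_nonneg[OF a1(2)] ap by simp
  have pisum2: "1 - (\<Sum>j\<in>J. pi a j) \<le> \<theta>" using pi_sum[OF a1(2)] theta by simp
  have C: "(pi a j + \<delta> * \<nu> j)/(1+\<delta>) - (pi a k + \<delta> * \<nu> k)/(1+\<delta>)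
     \<le> (Max (pi a ` J) - Min (pi a ` J)) * (1 - \<delta> * \<epsilon> / 4) + 2 * \<delta> * \<eta>" if "j \<in> J" "k \<in> J" for j k
    by (rule contraction[OF Jfin Jtwo Jne eps pi_ge[OF a1(2)] pisum pisum2 nuge nusum rel dpos _ _ _ that])
       (use dl small1 small2 Jcard in \<open>auto simp: \<delta>_def\<close>)
  obtain j k where jk: "j \<in> J" "k \<in> J" "R b = pi b j - pi b k" using R_attained by blast
  have "pi b j - pi b k \<le> R a * (1 - \<delta> * \<epsilon> / 4) + 2 * \<delta> * \<eta>"
    using C[OF jk(1,2)] unfolding key R_def by simp
  then show ?thesis using jk(3) unfolding \<delta>_def by simp
qed

end

lemma rec_lemma:
  fixes x :: "nat \<Rightarrow> real"
  assumes rho: "0 < \<rho>" "\<rho> \<le> 1" and step: "\<And>k. x (Suc k) \<le> (1 - \<rho>) * x k + \<beta>" and g: "\<gamma> > 0"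
  shows "\<exists>K. \<forall>k\<ge>K. x k \<le> \<beta> / \<rho> + \<gamma>"
proof -
  define y where "y k = x k - \<beta> / \<rho>" for k
  have ystep: "y (Suc k) \<le> (1 - \<rho>) * y k" for k
  proof -
    have "(1 - \<rho>) * (\<beta> / \<rho>) + \<beta> = \<beta> / \<rho>" using rho by (simp add: field_simps)
    then show ?thesis using step[of k] unfolding y_def by (simp add: algebra_simps)
  qed
  have ybound: "y k \<le> (1 - \<rho>)^k * \<bar>y 0\<bar>" for k
  proof (induction k)
    case 0 then show ?case by simp
  next
    case (Suc k)
    have "y (Suc k) \<le> (1 - \<rho>) * y k" by (rule ystep)
    also have "\<dots> \<le> (1 - \<rho>) * ((1 - \<rho>)^k * \<bar>y 0\<bar>)" using Suc rho by (intro mult_left_mono) auto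
    finally show ?case by simp
  qed
  have "(\<lambda>k. (1 - \<rho>)^k * \<bar>y 0\<bar>) \<longlonglongrightarrow> 0 * \<bar>y 0\<bar>"
    using rho by (intro tendsto_mult LIMSEQ_power_zero tendsto_const) auto
  then have "eventually (\<lambda>k. (1 - \<rho>)^k * \<bar>y 0\<bar> < \<gamma>) sequentially"
    using g by (simp add: order_tendsto_iff)
  then obtain K where K: "\<And>k. k \<ge> K \<Longrightarrow> (1 - \<rho>)^k * \<bar>y 0\<bar> < \<gamma>" unfolding eventually_sequentially by blast
  show ?thesis
  proof (intro exI allI impI)
    fix k assume "k \<ge> K"
    then have "y k < \<gamma>" using ybound[of k] K[of k] by linarith
    then show "x k \<le> \<beta> / \<rho> + \<gamma>" unfolding y_def by simp
  qed
qed

lemma block_find: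
  fixes a :: "nat \<Rightarrow> nat"
  assumes inc: "\<And>k. a k < a (Suc k)" and t: "a k0 \<le> t"
  shows "\<exists>k\<ge>k0. a k \<le> t \<and> t < a (Suc k)"
  using t
proof (induction t rule: dec_induct)
  case base then show ?case using inc by blast
next
  case (step t)
  then obtain k where k: "k \<ge> k0" "a k \<le> t" "t < a (Suc k)" by blast
  show ?case
  proof (cases "Suc t < a (Suc k)")
    case True then show ?thesis using k by auto
  next
    case False
    then have "Suc t = a (Suc k)" using k by simp
    then show ?thesis using k inc[of "Suc k"] by (intro exI[of _ "Suc k"]) auto
  qed
qed

context detsys begin

lemma eps_half: "\<epsilon> \<le> 1/2"
proof -
  have T: "T \<ge> T" by simp
  have "N 2 T \<le> real T - N 1 T" using pair_le[of T 1 2] d2 by auto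
  moreover have "N 1 T \<ge> \<epsilon> * real T" "N 2 T \<ge> \<epsilon> * real T" using H1[of T 1] H1[of T 2] d2 by auto
  ultimately have "2 * \<epsilon> * real T \<le> 1 * real T" by linarith
  moreover have "real T > 0" using T1 by simp
  ultimately show ?thesis by (simp add: mult_le_cancel_right)
qed

definition Dl :: "real \<Rightarrow> nat \<Rightarrow> nat" where "Dl \<delta> a = nat \<lceil>\<delta> * real a\<rceil>"

lemma Dl_bounds: assumes "\<delta> > 0" "1 \<le> \<delta> * real a"
  shows "real (Dl \<delta> a) \<ge> \<delta> * real a" "real (Dl \<delta> a) \<le> \<delta> * real a + 1" "Dl \<delta> a \<ge> 1"
    "real (Dl \<delta> a) \<le> 2 * \<delta> * real a"
proof -
  have c: "real (Dl \<delta> a) = of_int \<lceil>\<delta> * real a\<rceil>" unfolding Dl_def using assms by simp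
  show "real (Dl \<delta> a) \<ge> \<delta> * real a" unfolding c by linarith
  show "real (Dl \<delta> a) \<le> \<delta> * real a + 1" unfolding c by linarith
  then show "real (Dl \<delta> a) \<le> 2 * \<delta> * real a" using assms by linarith
  show "Dl \<delta> a \<ge> 1" using \<open>real (Dl \<delta> a) \<ge> \<delta> * real a\<close> assms by linarith
qed

definition Bd :: "real \<Rightarrow> nat \<Rightarrow> nat \<Rightarrow> real" where
  "Bd \<delta> j a = (2 * (\<bar>Mg j (a + Dl \<delta> a)\<bar> / real (a + Dl \<delta> a)) + \<bar>Mg j a\<bar> / real a) / \<delta>
     + (2 * K / \<delta> + 2 * K / \<epsilon>) * real a powr (- \<epsilon>) + real d / (\<delta> * real a) + 2 * real d / (\<epsilon> * real a)"

lemma L_powr: assumes "t \<ge> T" shows "L t \<le> K * real t * real t powr (- \<epsilon>)"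
proof -
  have tp: "real t > 0" using assms T1 by simp
  have "real t powr (1 - \<epsilon>) = real t powr (1 + (- \<epsilon>))" by simp
  also have "\<dots> = real t powr 1 * real t powr (- \<epsilon>)" by (rule powr_add)
  also have "\<dots> = real t * real t powr (- \<epsilon>)" using tp by simp
  finally show ?thesis using L_bound[OF assms] by (simp add: mult.assoc)
qed

lemma Eb_est:
  assumes a: "T < a" and dl: "0 < \<delta>" "\<delta> \<le> 1/2" "1 \<le> \<delta> * real a" and j: "j \<in> J"
  shows "Eb j a (a + Dl \<delta> a) \<le> (2 * real d * \<delta> / \<epsilon> + Bd \<delta> j a) * real (Dl \<delta> a)"
proof -
  define D where "D = Dl \<delta> a"
  define b where "b = a + D"
  have Db: "real D \<ge> \<delta> * real a" "real D \<le> \<delta> * real a + 1" "D \<ge> 1" "real D \<le> 2 * \<delta> * real a"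
    using Dl_bounds[OF dl(1) dl(3)] unfolding D_def by auto
  have ap: "real a > 0" using a by simp
  have a1: "T \<le> a" using a by simp
  have Dp: "real D > 0" using Db by simp
  have "(2 * \<delta>) * real a \<le> 1 * real a" using dl ap by (intro mult_right_mono) auto
  then have ba: "real b \<le> 2 * real a" using Db unfolding b_def by simp
  have bp: "real b > 0" using ap unfolding b_def by simp
  have aD: "real a \<le> real D / \<delta>" using Db dl by (simp add: field_simps)
  have rb: "real b - real a = real D" unfolding b_def by simp
  define m where "m t = \<bar>Mg j t\<bar> / real t" for t
  have apow: "real a powr (- \<epsilon>) \<ge> 0" by simp
  have bpow: "real b powr (- \<epsilon>) \<le> real a powr (- \<epsilon>)"
    using ap eps unfolding b_def by (intro powr_mono2') auto
  have p2: "\<bar>Mg j b - Mg j a\<bar> \<le> real D * ((2 * m b + m a) / \<delta>)"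
  proof -
    have "\<bar>Mg j b - Mg j a\<bar> \<le> \<bar>Mg j b\<bar> + \<bar>Mg j a\<bar>" by linarith
    also have "\<dots> = m b * real b + m a * real a" unfolding m_def using ap bp by simp
    also have "\<dots> \<le> m b * (2 * real a) + m a * real a"
      using ba unfolding m_def by (intro add_mono mult_left_mono) auto
    also have "\<dots> = real a * (2 * m b + m a)" by (simp add: algebra_simps)
    also have "\<dots> \<le> (real D / \<delta>) * (2 * m b + m a)"
      using aD unfolding m_def by (intro mult_right_mono) auto
    finally show ?thesis by (simp add: field_simps)
  qed
  have p3: "L b \<le> real D * (2 * K / \<delta> * real a powr (- \<epsilon>))"
  proof -
    have "L b \<le> K * real b * real b powr (- \<epsilon>)" using L_powr[of b] a unfolding b_def by simp
    also have "\<dots> \<le> K * (2 * real a) * real a powr (- \<epsilon>)"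
      using K0 ba bpow bp by (intro mult_mono) (auto intro: mult_nonneg_nonneg)
    also have "\<dots> \<le> K * (2 * (real D / \<delta>)) * real a powr (- \<epsilon>)"
      using K0 aD by (intro mult_right_mono mult_left_mono) auto
    finally show ?thesis by (simp add: field_simps)
  qed
  have p4: "(\<Sum>s\<in>{a..<b}. L s / (\<epsilon> * real s)) \<le> real D * (2 * K / \<epsilon> * real a powr (- \<epsilon>))"
  proof -
    have "(\<Sum>s\<in>{a..<b}. L s / (\<epsilon> * real s)) \<le> (\<Sum>s\<in>{a..<b}. K / \<epsilon> * real a powr (- \<epsilon>))"
    proof (intro sum_mono)
      fix s assume s: "s \<in> {a..<b}"
      have sp: "real s > 0" using s ap by auto
      have "L s \<le> K * real s * real s powr (- \<epsilon>)" using L_powr[of s] s a by simp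
      then have "L s / (\<epsilon> * real s) \<le> K * real s * real s powr (- \<epsilon>) / (\<epsilon> * real s)"
        using eps sp by (intro divide_right_mono) auto
      also have "\<dots> = K / \<epsilon> * real s powr (- \<epsilon>)" using sp eps by (simp add: field_simps)
      also have "\<dots> \<le> K / \<epsilon> * real a powr (- \<epsilon>)"
        using K0 eps s ap by (intro mult_left_mono powr_mono2') auto
      finally show "L s / (\<epsilon> * real s) \<le> K / \<epsilon> * real a powr (- \<epsilon>)" .
    qed
    also have "\<dots> = real D * (K / \<epsilon> * real a powr (- \<epsilon>))" unfolding b_def by simp
    also have "\<dots> \<le> real D * (2 * K / \<epsilon> * real a powr (- \<epsilon>))"
      using Dp K0 eps by (intro mult_left_mono mult_right_mono) (auto simp: field_simps)
    finally show ?thesis .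
  qed
  have p5: "real d * 1 \<le> real D * (real d / (\<delta> * real a))"
  proof -
    have "(\<delta> * real a) * (real d / (\<delta> * real a)) \<le> real D * (real d / (\<delta> * real a))"
      using Db(1) dl ap by (intro mult_right_mono) auto
    moreover have "(\<delta> * real a) * (real d / (\<delta> * real a)) = real d" using dl ap by simp
    ultimately show ?thesis by simp
  qed
  have p6: "real d * (2 * (real b - real a)^2 / (\<epsilon> * real a)) \<le> real D * (2 * real d * \<delta> / \<epsilon> + 2 * real d / (\<epsilon> * real a))"
  proof -
    have "real d * (2 * (real b - real a)^2 / (\<epsilon> * real a)) = real D * (2 * real d * real D / (\<epsilon> * real a))"
      unfolding rb by (simp add: power2_eq_square)
    also have "\<dots> \<le> real D * (2 * real d * (\<delta> * real a + 1) / (\<epsilon> * real a))"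
      using Dp Db eps ap by (intro mult_left_mono divide_right_mono) auto
    also have "\<dots> = real D * (2 * real d * \<delta> / \<epsilon> + 2 * real d / (\<epsilon> * real a))"
      using ap eps by (simp add: field_simps)
    finally show ?thesis .
  qed
  have "Eb j a b \<le> real D * ((2 * m b + m a) / \<delta>) + real D * (2 * K / \<delta> * real a powr (- \<epsilon>))
      + real D * (2 * K / \<epsilon> * real a powr (- \<epsilon>)) + real D * (real d / (\<delta> * real a))
      + real D * (2 * real d * \<delta> / \<epsilon> + 2 * real d / (\<epsilon> * real a))"
    unfolding Eb_def using p2 p3 p4 p5 p6 by (simp add: algebra_simps)
  also have "\<dots> = (2 * real d * \<delta> / \<epsilon> + Bd \<delta> j a) * real D"
    unfolding Bd_def m_def b_def D_def by (simp add: algebra_simps)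
  finally show ?thesis unfolding b_def D_def .
qed

lemma Bd_lim: assumes "\<delta> > 0" "j \<in> J" shows "(\<lambda>a. Bd \<delta> j a) \<longlonglongrightarrow> 0"
proof -
  have m: "(\<lambda>t. \<bar>Mg j t\<bar> / real t) \<longlonglongrightarrow> 0"
  proof -
    have "(\<lambda>t. \<bar>Mg j t / real t\<bar>) \<longlonglongrightarrow> \<bar>0\<bar>" by (intro tendsto_rabs H5 assms)
    then show ?thesis by (simp add: abs_divide)
  qed
  have f: "filterlim (\<lambda>a. a + Dl \<delta> a) at_top sequentially"
    by (rule filterlim_at_top_mono[OF filterlim_ident]) auto
  have mb: "(\<lambda>a. \<bar>Mg j (a + Dl \<delta> a)\<bar> / real (a + Dl \<delta> a)) \<longlonglongrightarrow> 0"
    using filterlim_compose[OF m f] by (simp add: o_def)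
  have pw: "(\<lambda>a. real a powr (- \<epsilon>)) \<longlonglongrightarrow> 0"
    using eps by (intro tendsto_neg_powr filterlim_real_sequentially) auto
  have inv: "(\<lambda>a. inverse (real a)) \<longlonglongrightarrow> 0" by (rule lim_inverse_n)
  have e: "Bd \<delta> j = (\<lambda>a. (2 * (\<bar>Mg j (a + Dl \<delta> a)\<bar> / real (a + Dl \<delta> a)) + \<bar>Mg j a\<bar> / real a) / \<delta>
     + (2 * K / \<delta> + 2 * K / \<epsilon>) * real a powr (- \<epsilon>) + (real d / \<delta>) * inverse (real a) + (2 * real d / \<epsilon>) * inverse (real a))"
    unfolding Bd_def by (intro ext) (simp add: field_simps)
  have "(\<lambda>a. (2 * (\<bar>Mg j (a + Dl \<delta> a)\<bar> / real (a + Dl \<delta> a)) + \<bar>Mg j a\<bar> / real a) / \<delta>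
     + (2 * K / \<delta> + 2 * K / \<epsilon>) * real a powr (- \<epsilon>) + (real d / \<delta>) * inverse (real a) + (2 * real d / \<epsilon>) * inverse (real a))
     \<longlonglongrightarrow> (2 * 0 + 0) / \<delta> + (2 * K / \<delta> + 2 * K / \<epsilon>) * 0 + (real d / \<delta>) * 0 + (2 * real d / \<epsilon>) * 0"
    by (intro tendsto_intros mb m pw inv) (use assms in auto)
  then show ?thesis unfolding e by simp
qed

definition good :: "real \<Rightarrow> real \<Rightarrow> nat \<Rightarrow> bool" where
  "good \<delta> \<gamma> a \<longleftrightarrow> T < a \<and> 1 \<le> \<delta> * real a \<and> L a / real a \<le> \<gamma>
     \<and> (\<forall>j\<in>J. Eb j a (a + Dl \<delta> a) \<le> (2 * real d * \<delta> / \<epsilon> + \<gamma>) * real (Dl \<delta> a))"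

lemma eventually_good: assumes "0 < \<delta>" "\<delta> \<le> 1/2" "\<gamma> > 0"
  shows "eventually (good \<delta> \<gamma>) sequentially"
proof -
  have e1: "eventually (\<lambda>a. T < a) sequentially" by (rule eventually_gt_at_top)
  have e2: "eventually (\<lambda>a. 1 \<le> \<delta> * real a) sequentially"
  proof -
    obtain n :: nat where "1 / \<delta> < real n" using reals_Archimedean2 by blast
    then have "\<forall>a\<ge>n. 1 \<le> \<delta> * real a" using assms by (auto simp: field_simps intro: order_trans[of _ "\<delta> * real n"])
    then show ?thesis unfolding eventually_sequentially by blast
  qed
  have e3: "eventually (\<lambda>a. L a / real a \<le> \<gamma>) sequentially"
  proof -
    have pw: "(\<lambda>a. K * real a powr (- \<epsilon>)) \<longlonglongrightarrow> K * 0"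
      using eps by (intro tendsto_mult tendsto_const tendsto_neg_powr filterlim_real_sequentially) auto
    then have "eventually (\<lambda>a. K * real a powr (- \<epsilon>) < \<gamma>) sequentially"
      using assms by (simp add: order_tendsto_iff)
    then show ?thesis using eventually_gt_at_top[of T]
    proof eventually_elim
      case (elim a)
      have ap: "real a > 0" using elim T1 by simp
      have "L a / real a \<le> K * real a * real a powr (- \<epsilon>) / real a"
        using L_powr[of a] elim ap by (intro divide_right_mono) auto
      also have "\<dots> = K * real a powr (- \<epsilon>)" using ap by simp
      finally show ?case using elim by simp
    qed
  qed
  have e4: "eventually (\<lambda>a. \<forall>j\<in>J. Bd \<delta> j a \<le> \<gamma>) sequentially"
  proof (rule eventually_ball_finite[OF Jfin], intro ballI)
    fix j assume j: "j \<in> J"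
    have "eventually (\<lambda>a. Bd \<delta> j a < \<gamma>) sequentially"
      using Bd_lim[OF assms(1) j] assms by (simp add: order_tendsto_iff)
    then show "eventually (\<lambda>a. Bd \<delta> j a \<le> \<gamma>) sequentially" by (rule eventually_mono) auto
  qed
  show ?thesis using e1 e2 e3 e4
  proof eventually_elim
    case (elim a)
    have "\<forall>j\<in>J. Eb j a (a + Dl \<delta> a) \<le> (2 * real d * \<delta> / \<epsilon> + \<gamma>) * real (Dl \<delta> a)"
    proof
      fix j assume j: "j \<in> J"
      have "Eb j a (a + Dl \<delta> a) \<le> (2 * real d * \<delta> / \<epsilon> + Bd \<delta> j a) * real (Dl \<delta> a)"
        using Eb_est[OF _ assms(1,2) _ j] elim by auto
      also have "\<dots> \<le> (2 * real d * \<delta> / \<epsilon> + \<gamma>) * real (Dl \<delta> a)"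
        using elim j by (intro mult_right_mono) auto
      finally show "Eb j a (a + Dl \<delta> a) \<le> (2 * real d * \<delta> / \<epsilon> + \<gamma>) * real (Dl \<delta> a)" .
    qed
    then show ?case unfolding good_def using elim by auto
  qed
qed

end

context detsys begin

lemma interp:
  assumes a: "T \<le> a" "1 \<le> a" "a \<le> t" and j: "j \<in> J"
  shows "\<bar>pi t j - pi a j\<bar> \<le> 2 * (real t - real a) / real a"
proof -
  define x where "x = N j t"
  define x' where "x' = N j a"
  have ap: "real a > 0" using a by simp
  have tp: "real t > 0" using a by simp
  have xx: "\<bar>x - x'\<bar> \<le> real t - real a" using N_mono[OF a(1) a(3) j] unfolding x_def x'_def by auto
  have x'0: "0 \<le> x'" "x' \<le> real a"
  proof -
    show "0 \<le> x'" unfolding x'_def using N_nonneg[OF a(1) j] .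
    have "x' \<le> (\<Sum>k\<in>J. N k a)" unfolding x'_def using j N_nonneg[OF a(1)]
      by (intro member_le_sum) auto
    then show "x' \<le> real a" using H2a[OF a(1)] by simp
  qed
  have ta: "real t - real a \<ge> 0" using a by simp
  have eq: "x / real t - x' / real a = ((x - x') * real a - x' * (real t - real a)) / (real t * real a)"
    using ap tp by (simp add: field_simps)
  have num: "\<bar>(x - x') * real a - x' * (real t - real a)\<bar> \<le> 2 * (real t - real a) * real a"
  proof -
    have e1: "\<bar>(x - x') * real a\<bar> = \<bar>x - x'\<bar> * real a" using ap by (simp add: abs_mult)
    have e2: "\<bar>x' * (real t - real a)\<bar> = x' * (real t - real a)" using x'0 ta by (simp add: abs_mult)
    have "\<bar>x - x'\<bar> * real a \<le> (real t - real a) * real a" using xx ap by (intro mult_right_mono) auto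
    moreover have "x' * (real t - real a) \<le> real a * (real t - real a)" using x'0 ta by (intro mult_right_mono) auto
    ultimately show ?thesis using abs_triangle_ineq4[of "(x - x') * real a" "x' * (real t - real a)"] e1 e2
      by (simp add: algebra_simps)
  qed
  have "\<bar>pi t j - pi a j\<bar> = \<bar>(x - x') * real a - x' * (real t - real a)\<bar> / (real t * real a)"
    unfolding pi_def x_def[symmetric] x'_def[symmetric] eq using ap tp by (simp add: abs_divide)
  also have "\<dots> \<le> 2 * (real t - real a) * real a / (real t * real a)"
    using num ap tp by (intro divide_right_mono) auto
  also have "\<dots> = 2 * (real t - real a) / real t" using ap by simp
  also have "\<dots> \<le> 2 * (real t - real a) / real a" using ta ap a by (intro divide_left_mono) auto
  finally show ?thesis .
qed

lemma R_interp:
  assumes a: "T \<le> a" "1 \<le> a" "a \<le> t"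
  shows "R t \<le> R a + 4 * (real t - real a) / real a"
proof -
  obtain j k where jk: "j \<in> J" "k \<in> J" "R t = pi t j - pi t k" using R_attained by blast
  have "pi t j \<le> pi a j + 2 * (real t - real a) / real a" using interp[OF a jk(1)] by linarith
  moreover have "pi a k - 2 * (real t - real a) / real a \<le> pi t k" using interp[OF a jk(2)] by linarith
  moreover have "pi a j - pi a k \<le> R a" using R_ge[OF jk(1,2)] .
  ultimately show ?thesis using jk(3) by linarith
qed

lemma R_small: assumes tau: "\<tau> > 0" shows "eventually (\<lambda>t. R t \<le> \<tau>) sequentially"
proof -
  have dpos: "real d \<ge> 2" using d2 by simp
  have e2: "\<epsilon>^2 > 0" using eps by simp
  define \<delta> where "\<delta> = min (\<epsilon>^2 / (8 * real d^2)) (\<tau> / (2 * (32 * real d / \<epsilon>^2 + 8)))"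
  have c0: "\<delta> > 0" unfolding \<delta>_def using e2 dpos tau by (simp add: add_pos_pos)
  have c2: "\<delta> \<le> \<epsilon>^2 / (8 * real d^2)" unfolding \<delta>_def by simp
  have c3': "\<delta> \<le> \<tau> / (2 * (32 * real d / \<epsilon>^2 + 8))" unfolding \<delta>_def by simp
  have pos1: "2 * (32 * real d / \<epsilon>^2 + 8) > 0" using e2 dpos by (simp add: add_pos_pos)
  have c3: "(32 * real d / \<epsilon>^2 + 8) * \<delta> \<le> \<tau> / 2"
    using c3' pos1 by (simp add: field_simps)
  have c1: "\<delta> \<le> \<epsilon>^2 / 8"
  proof -
    have "real d * real d \<ge> 2 * 2" using dpos by (intro mult_mono) auto
    then have dd: "8 \<le> 8 * real d^2" by (simp add: power2_eq_square)
    have "\<epsilon>^2 / (8 * real d^2) \<le> \<epsilon>^2 / 8" using e2 dd d2 by (intro divide_left_mono) auto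
    then show ?thesis using c2 by linarith
  qed
  have eh: "\<epsilon> \<le> 1/2" by (rule eps_half)
  have ee: "\<epsilon>^2 \<le> 1/4"
  proof -
    have "\<epsilon>^2 \<le> (1/2)^2" using eps eh by (intro power_mono) auto
    also have "(1/2::real)^2 = 1/4" by (simp add: power2_eq_square)
    finally show ?thesis .
  qed
  have dhalf: "\<delta> \<le> 1/2" using c1 ee by linarith
  have c2': "2 * real d^2 * \<delta> / \<epsilon> \<le> \<epsilon> / 4"
  proof -
    have "8 * real d^2 * \<delta> \<le> \<epsilon>^2" using c2 dpos by (simp add: field_simps)
    then show ?thesis using eps by (simp add: field_simps power2_eq_square)
  qed
  define \<gamma> where "\<gamma> = min (\<epsilon> / (4 * (real d + 2 / \<epsilon>^2))) (\<tau> / (2 * (16 / \<epsilon> + 1)))"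
  have pos2: "4 * (real d + 2 / \<epsilon>^2) > 0" using e2 dpos by (simp add: add_pos_pos)
  have pos3: "2 * (16 / \<epsilon> + 1) > 0" using eps by (simp add: add_pos_pos)
  have g0: "\<gamma> > 0" unfolding \<gamma>_def using eps pos2 pos3 tau by simp
  have g1: "(real d + 2 / \<epsilon>^2) * \<gamma> \<le> \<epsilon> / 4"
  proof -
    have "\<gamma> \<le> \<epsilon> / (4 * (real d + 2 / \<epsilon>^2))" unfolding \<gamma>_def by simp
    then show ?thesis using pos2 by (simp add: field_simps)
  qed
  have g2: "(16 / \<epsilon> + 1) * \<gamma> \<le> \<tau> / 2"
  proof -
    have "\<gamma> \<le> \<tau> / (2 * (16 / \<epsilon> + 1))" unfolding \<gamma>_def by simp
    then show ?thesis using pos3 by (simp add: field_simps)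
  qed
  obtain A where A: "\<And>a. a \<ge> A \<Longrightarrow> good \<delta> \<gamma> a"
    using eventually_good[OF c0 dhalf g0] unfolding eventually_sequentially by blast
  define as where "as = rec_nat A (\<lambda>_ a. a + Dl \<delta> a)"
  have as0: "as 0 = A" and asS: "as (Suc k) = as k + Dl \<delta> (as k)" for k unfolding as_def by simp_all
  have asA: "as k \<ge> A" for k by (induction k) (auto simp: asS as0)
  have gd: "good \<delta> \<gamma> (as k)" for k using A[OF asA] .
  have gdD: "T < as k" "1 \<le> \<delta> * real (as k)" "L (as k) / real (as k) \<le> \<gamma>"
    "\<And>j. j \<in> J \<Longrightarrow> Eb j (as k) (as k + Dl \<delta> (as k)) \<le> (2 * real d * \<delta> / \<epsilon> + \<gamma>) * real (Dl \<delta> (as k))" for k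
    using gd[of k] unfolding good_def by auto
  have DB: "real (Dl \<delta> (as k)) \<ge> \<delta> * real (as k)" "Dl \<delta> (as k) \<ge> 1" "real (Dl \<delta> (as k)) \<le> 2 * \<delta> * real (as k)" for k
    using Dl_bounds[OF c0 gdD(2)[of k]] by auto
  have inc: "as k < as (Suc k)" for k using DB(2)[of k] by (simp add: asS)
  define \<eta> where "\<eta> = 2 * real d * \<delta> / \<epsilon> + \<gamma>"
  have eta0: "\<eta> \<ge> 0" unfolding \<eta>_def using c0 g0 eps by simp
  have deta: "real d * \<eta> \<le> \<epsilon>/4 + real d * \<gamma>"
  proof -
    have "real d * \<eta> = 2 * real d^2 * \<delta> / \<epsilon> + real d * \<gamma>" unfolding \<eta>_def by (simp add: power2_eq_square algebra_simps)
    then show ?thesis using c2' by linarith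
  qed
  have g1': "real d * \<gamma> + 2 * \<gamma> / \<epsilon>^2 \<le> \<epsilon>/4" using g1 by (simp add: algebra_simps)
  have step: "R (as (Suc k)) \<le> (1 - \<delta> * \<epsilon> / 4) * R (as k) + 4 * \<delta> * \<eta>" for k
  proof -
    let ?a = "as k" and ?D = "Dl \<delta> (as k)"
    have ap: "real ?a > 0" using gdD(1)[of k] by simp
    define dk where "dk = real ?D / real ?a"
    have dk1: "\<delta> \<le> dk" unfolding dk_def using DB(1)[of k] ap by (simp add: field_simps)
    have dk2: "dk \<le> 2 * \<delta>" unfolding dk_def using DB(3)[of k] ap by (simp add: field_simps)
    have B: "R (as (Suc k)) \<le> R ?a * (1 - dk * \<epsilon> / 4) + 2 * dk * \<eta>"
      unfolding dk_def asS
    proof (rule block_contract[OF gdD(1) DB(2) refl])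
      show "Eb j ?a (?a + ?D) \<le> \<eta> * real ?D" if "j \<in> J" for j using gdD(4)[OF that, of k] unfolding \<eta>_def by (simp add: mult.commute)
      show "L ?a / real ?a \<le> \<gamma>" using gdD(3) .
      show "real ?D / real ?a \<le> \<epsilon>^2/4" using dk2 c1 unfolding dk_def by linarith
      have "2 * \<gamma> / \<epsilon>^2 \<ge> 0" using g0 e2 by simp
      then show "real d * \<eta> \<le> 1" using deta g1' eh by linarith
      show "real d * \<eta> + 2 * \<gamma> / \<epsilon>^2 \<le> \<epsilon>/2" using deta g1' by linarith
    qed
    have "\<delta> * \<epsilon> \<le> dk * \<epsilon>" using dk1 eps by (intro mult_right_mono) auto
    then have "1 - dk * \<epsilon> / 4 \<le> 1 - \<delta> * \<epsilon> / 4" by simp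
    then have "R ?a * (1 - dk * \<epsilon> / 4) \<le> R ?a * (1 - \<delta> * \<epsilon> / 4)"
      using R_nonneg[of ?a] by (intro mult_left_mono) auto
    moreover have "(2 * dk) * \<eta> \<le> (4 * \<delta>) * \<eta>" using dk2 eta0 by (intro mult_right_mono) auto
    ultimately show ?thesis using B by (simp add: algebra_simps)
  qed
  have "\<delta> * \<epsilon> \<le> 1 * 1" using c0 eps dhalf eh by (intro mult_mono) auto
  then have rho: "0 < \<delta> * \<epsilon> / 4" "\<delta> * \<epsilon> / 4 \<le> 1" using c0 eps by auto
  obtain K0 where K0: "\<And>k. k \<ge> K0 \<Longrightarrow> R (as k) \<le> 4 * \<delta> * \<eta> / (\<delta> * \<epsilon> / 4) + \<gamma>"
    using rec_lemma[of "\<delta> * \<epsilon> / 4" "\<lambda>k. R (as k)" "4 * \<delta> * \<eta>" \<gamma>, OF rho step g0] by blast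
  have val: "4 * \<delta> * \<eta> / (\<delta> * \<epsilon> / 4) + \<gamma> + 8 * \<delta> \<le> \<tau>"
  proof -
    have "4 * \<delta> * \<eta> / (\<delta> * \<epsilon> / 4) = 16 * \<eta> / \<epsilon>" using c0 eps by (simp add: field_simps)
    also have "\<dots> = 32 * real d * \<delta> / \<epsilon>^2 + 16 * \<gamma> / \<epsilon>" unfolding \<eta>_def using eps by (simp add: field_simps power2_eq_square)
    finally have "4 * \<delta> * \<eta> / (\<delta> * \<epsilon> / 4) + \<gamma> + 8 * \<delta> = (32 * real d / \<epsilon>^2 + 8) * \<delta> + (16 / \<epsilon> + 1) * \<gamma>"
      by (simp add: algebra_simps)
    then show ?thesis using c3 g2 by linarith
  qed
  show ?thesis unfolding eventually_sequentially
  proof (intro exI allI impI)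
    fix t assume t: "t \<ge> as K0"
    obtain k where k: "k \<ge> K0" "as k \<le> t" "t < as (Suc k)" using block_find[OF inc t] by blast
    have a1: "T \<le> as k" "1 \<le> as k" using gdD(1)[of k] T1 by auto
    have ap: "real (as k) > 0" using a1 by simp
    have "R t \<le> R (as k) + 4 * (real t - real (as k)) / real (as k)" by (rule R_interp[OF a1 k(2)])
    also have "4 * (real t - real (as k)) / real (as k) \<le> 8 * \<delta>"
    proof -
      have "real t - real (as k) \<le> real (Dl \<delta> (as k))" using k(3) unfolding asS by simp
      also have "\<dots> \<le> 2 * \<delta> * real (as k)" using DB(3) .
      finally show ?thesis using ap by (simp add: field_simps)
    qed
    finally have "R t \<le> R (as k) + 8 * \<delta>" by simp
    then show "R t \<le> \<tau>" using K0[OF k(1)] val by linarith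
  qed
qed

lemma det_conv: assumes j: "j \<in> J" shows "(\<lambda>t. N j t / real t) \<longlonglongrightarrow> 1 / real d"
proof (rule LIMSEQ_I)
  fix e :: real assume e: "e > 0"
  have dpos: "real d \<ge> 2" using d2 by simp
  have bnd: "\<bar>pi t j - 1 / real d\<bar> \<le> R t + L t / real t" if t: "t \<ge> T" for t
  proof -
    have tp: "real t > 0" using t T1 by simp
    have s: "(\<Sum>k\<in>J. pi t j - pi t k) = real d * pi t j - (1 - L t / real t)"
      using pi_sum[OF t] by (simp add: sum_subtractf Jcard)
    have "\<bar>\<Sum>k\<in>J. pi t j - pi t k\<bar> \<le> (\<Sum>k\<in>J. \<bar>pi t j - pi t k\<bar>)" by (rule sum_abs)
    also have "\<dots> \<le> (\<Sum>k\<in>J. R t)"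
    proof (intro sum_mono)
      fix k assume k: "k \<in> J"
      show "\<bar>pi t j - pi t k\<bar> \<le> R t" using R_ge[OF j k, of t] R_ge[OF k j, of t] by linarith
    qed
    also have "\<dots> = real d * R t" by simp
    finally have A: "\<bar>real d * pi t j - 1 + L t / real t\<bar> \<le> real d * R t" using s by simp
    have Lt: "L t / real t \<ge> 0" using L_nonneg[OF t] tp by simp
    have "\<bar>real d * pi t j - 1\<bar> \<le> real d * R t + L t / real t" using A Lt by linarith
    also have "\<dots> \<le> real d * R t + real d * (L t / real t)"
    proof -
      have "1 * (L t / real t) \<le> real d * (L t / real t)" using Lt dpos by (intro mult_right_mono) auto
      then show ?thesis by simp
    qed
    finally have B: "\<bar>real d * pi t j - 1\<bar> \<le> real d * (R t + L t / real t)" by (simp add: algebra_simps)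
    have "\<bar>pi t j - 1 / real d\<bar> = \<bar>real d * pi t j - 1\<bar> / real d" using dpos by (simp add: field_simps abs_divide)
    also have "\<dots> \<le> real d * (R t + L t / real t) / real d" using B dpos by (intro divide_right_mono) auto
    also have "\<dots> = R t + L t / real t" using dpos by simp
    finally show ?thesis .
  qed
  have ev1: "eventually (\<lambda>t. R t \<le> e/3) sequentially" using R_small[of "e/3"] e by simp
  have ev2: "eventually (\<lambda>t. L t / real t \<le> e/3) sequentially"
    using eventually_good[of "1/2" "e/3"] e unfolding good_def by (auto elim: eventually_mono)
  have ev3: "eventually (\<lambda>t. t \<ge> T) sequentially" by (rule eventually_ge_at_top)
  have "eventually (\<lambda>t. norm (N j t / real t - 1 / real d) < e) sequentially"
    using ev1 ev2 ev3
  proof eventually_elim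
    case (elim t)
    have "\<bar>pi t j - 1 / real d\<bar> \<le> e/3 + e/3" using bnd[OF elim(3)] elim(1,2) by linarith
    then show ?case using e unfolding pi_def by simp
  qed
  then show "\<exists>no. \<forall>n\<ge>no. norm (N j n / real n - 1 / real d) < e" unfolding eventually_sequentially by blast
qed

end

context detsys begin
lemma L_lim: "(\<lambda>t. L t / real t) \<longlonglongrightarrow> 0"
proof (rule LIMSEQ_I)
  fix e :: real assume e: "e > 0"
  have "eventually (\<lambda>t. L t / real t \<le> e/2) sequentially"
    using eventually_good[of "1/2" "e/2"] e unfolding good_def by (auto elim: eventually_mono)
  moreover have "eventually (\<lambda>t. t \<ge> T) sequentially" by (rule eventually_ge_at_top)
  ultimately have "eventually (\<lambda>t. norm (L t / real t - 0) < e) sequentially"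
  proof eventually_elim
    case (elim t)
    have l0: "L t \<ge> 0" using L_nonneg[OF elim(2)] .
    have "norm (L t / real t - 0) = L t / real t" using l0 by simp
    then show ?case using elim(1) e by linarith
  qed
  then show "\<exists>no. \<forall>n\<ge>no. norm (L n / real n - 0) < e" unfolding eventually_sequentially by blast
qed
end

definition Lv :: "nat \<Rightarrow> (nat \<Rightarrow> nat) \<Rightarrow> vtx set" where
  "Lv d r = {Inr (i, k) | i k. i \<in> {1..d} \<and> k \<in> {1..r i}}"

lemma Lv_eq: "Lv d r = (\<lambda>(i,k). Inr (i,k)) ` (SIGMA i:{1..d}. {1..r i})"
  unfolding Lv_def by auto

lemma Lv_fin: "finite (Lv d r)" unfolding Lv_eq by simp

lemma Vd_split: "Vd d r = Inl ` {1..d} \<union> Lv d r" unfolding Vd_def Lv_def by simp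

lemma Lv_disj: "Inl ` {1..d} \<inter> Lv d r = {}" unfolding Lv_def by auto

lemma sum_Vd: "(\<Sum>v\<in>Vd d r. f v) = (\<Sum>i\<in>{1..d}. f (Inl i)) + (\<Sum>v\<in>Lv d r. f v)"
proof -
  have "(\<Sum>v\<in>Vd d r. f v) = (\<Sum>v\<in>Inl ` {1..d}. f v) + (\<Sum>v\<in>Lv d r. f v)"
    unfolding Vd_split by (rule sum.union_disjoint) (use Lv_fin Lv_disj in auto)
  also have "(\<Sum>v\<in>Inl ` {1..d}. f v) = (\<Sum>i\<in>{1..d}. f (Inl i))" by (subst sum.reindex) (auto simp: inj_on_def)
  finally show ?thesis .
qed

lemma sum_Lv: "(\<Sum>v\<in>Lv d r. f v) = (\<Sum>i\<in>{1..d}. \<Sum>k\<in>{1..r i}. f (Inr (i,k)))"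
proof -
  have inj: "inj_on (\<lambda>(i,k). Inr (i,k) :: vtx) (SIGMA i:{1..d}. {1..r i})" by (auto simp: inj_on_def)
  have "(\<Sum>v\<in>Lv d r. f v) = (\<Sum>(i,k)\<in>(SIGMA i:{1..d}. {1..r i}). f (Inr (i,k)))"
    unfolding Lv_eq by (subst sum.reindex[OF inj]) (simp add: case_prod_unfold)
  also have "\<dots> = (\<Sum>i\<in>{1..d}. \<Sum>k\<in>{1..r i}. f (Inr (i,k)))" by (rule sum.Sigma[symmetric]) auto
  finally show ?thesis .
qed

locale gl =
  fixes d :: nat and r :: "nat \<Rightarrow> nat" and z0 :: "vtx \<Rightarrow> nat" and h :: "nat \<Rightarrow> vtx" and \<epsilon> :: real and T :: nat
  assumes d2: "d \<ge> 2" and z0pos: "\<forall>v\<in>Vd d r. z0 v > 0"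
    and pathV: "\<And>s. s \<ge> tzero d r z0 \<Longrightarrow> h s \<in> Vd d r"
    and eps: "\<epsilon> > 0" and TT0: "T \<ge> tzero d r z0"
    and Amin: "\<And>t i. t \<ge> T \<Longrightarrow> i \<in> {1..d} \<Longrightarrow> real (Zp d r z0 h t (Inl i)) / real t \<ge> \<epsilon>"
    and Aleaf: "\<And>t i. t \<ge> T \<Longrightarrow> i \<in> {1..d} \<Longrightarrow> (\<Sum>k\<in>{1..r i}. real (Zp d r z0 h t (Inr (i,k)))) / real t \<le> real t powr (- \<epsilon>)"
    and mart: "\<And>j. j \<in> {1..d} \<Longrightarrow> (\<lambda>t. (\<Sum>s\<in>{tzero d r z0..<t}. ((if h (Suc s) = Inl j then 1 else 0) - trans_prob d r z0 h s (Inl j))) / real t) \<longlonglongrightarrow> 0"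
begin

abbreviation "T0 \<equiv> tzero d r z0"
abbreviation "V \<equiv> Vd d r"
abbreviation "J \<equiv> {1..d}"
definition Zr :: "nat \<Rightarrow> vtx \<Rightarrow> real" where "Zr t v = real (Zp d r z0 h t v)"
definition NN :: "nat \<Rightarrow> nat \<Rightarrow> real" where "NN j t = Zr t (Inl j)"
definition LL :: "nat \<Rightarrow> real" where "LL t = (\<Sum>v\<in>Lv d r. Zr t v)"
definition Mg :: "nat \<Rightarrow> nat \<Rightarrow> real" where
  "Mg j t = (\<Sum>s\<in>{T0..<t}. ((if h (Suc s) = Inl j then 1 else 0) - trans_prob d r z0 h s (Inl j)))"

lemma T0_pos: "T0 \<ge> 1"
proof -
  have "Inl 1 \<in> V" using d2 unfolding Vd_def by auto
  then have "z0 (Inl 1) \<le> T0" unfolding tzero_def by (intro member_le_sum) (auto simp: Vd_finite)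
  moreover have "z0 (Inl 1) > 0" using z0pos \<open>Inl 1 \<in> V\<close> by auto
  ultimately show ?thesis by simp
qed

lemma Zr_nonneg: "Zr t v \<ge> 0" unfolding Zr_def by simp

lemma Zp_Suc: assumes "t \<ge> T0" shows "Zp d r z0 h (Suc t) v = Zp d r z0 h t v + (if h (Suc t) = v then 1 else 0)"
proof -
  have e: "{s \<in> {T0<..Suc t}. h s = v} = (if h (Suc t) = v then insert (Suc t) {s \<in> {T0<..t}. h s = v} else {s \<in> {T0<..t}. h s = v})"
    using assms by (auto simp: le_Suc_eq)
  show ?thesis unfolding Zp_def e by auto
qed

lemma Zr_Suc: "t \<ge> T0 \<Longrightarrow> Zr (Suc t) v = Zr t v + (if h (Suc t) = v then 1 else 0)"
  unfolding Zr_def using Zp_Suc by simp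

lemma Zsum: "t \<ge> T0 \<Longrightarrow> (\<Sum>v\<in>V. Zr t v) = real t"
proof (induction t rule: dec_induct)
  case base
  have "Zr T0 v = real (z0 v)" for v unfolding Zr_def Zp_def by simp
  then show ?case unfolding tzero_def by simp
next
  case (step t)
  have "(\<Sum>v\<in>V. Zr (Suc t) v) = (\<Sum>v\<in>V. Zr t v) + (\<Sum>v\<in>V. (if h (Suc t) = v then 1 else 0))"
    using step(1) by (simp add: Zr_Suc sum.distrib)
  also have "(\<Sum>v\<in>V. (if h (Suc t) = v then 1 else 0 :: real)) = 1"
    using pathV[of "Suc t"] step(1) by (simp add: Vd_finite sum.delta)
  finally show ?case using step(3) by simp
qed

lemma Zsplit: "t \<ge> T0 \<Longrightarrow> (\<Sum>j\<in>J. NN j t) + LL t = real t"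
  using Zsum[of t] sum_Vd[where f="Zr t" and d=d and r=r] unfolding NN_def LL_def by simp

lemma LL_nonneg: "LL t \<ge> 0" unfolding LL_def by (intro sum_nonneg) (simp add: Zr_nonneg)

lemma LL_Suc: "t \<ge> T0 \<Longrightarrow> LL (Suc t) = LL t + (if h (Suc t) \<in> Lv d r then 1 else 0)"
  unfolding LL_def using Lv_fin by (simp add: Zr_Suc sum.distrib sum.delta)

lemma NN_Suc: "t \<ge> T0 \<Longrightarrow> NN j (Suc t) = NN j t + (if h (Suc t) = Inl j then 1 else 0)"
  unfolding NN_def by (simp add: Zr_Suc)

lemma LL_mono: "T0 \<le> a \<Longrightarrow> a \<le> t \<Longrightarrow> LL a \<le> LL t"
proof -
  assume a: "T0 \<le> a" "a \<le> t"
  show ?thesis using a(2)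
  proof (induction t rule: dec_induct)
    case base then show ?case by simp
  next
    case (step t) then show ?case using LL_Suc[of t] a by simp
  qed
qed

lemma leaf_tele: assumes "T0 < a" "a \<le> t"
  shows "(\<Sum>s\<in>{a..<t}. (if h s \<in> Lv d r then 1 else 0 :: real)) \<le> LL t"
proof -
  have "(\<Sum>s\<in>{a..<t}. (if h s \<in> Lv d r then 1 else 0 :: real)) = LL (t - 1) - LL (a - 1)"
    using assms(2)
  proof (induction t rule: dec_induct)
    case base then show ?case by simp
  next
    case (step t)
    have e: "{a..<Suc t} = insert t {a..<t}" using step by auto
    have "LL t = LL (t - 1) + (if h t \<in> Lv d r then 1 else 0)"
      using LL_Suc[of "t - 1"] step assms by (simp add: Suc_diff_1)
    then show ?case unfolding e using step by simp
  qed
  also have "\<dots> \<le> LL t"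
  proof -
    have "T0 \<le> t - 1" using assms by simp
    then have "LL (t - 1) \<le> LL t" by (rule LL_mono) simp
    then show ?thesis using LL_nonneg[of "a - 1"] by linarith
  qed
  finally show ?thesis .
qed

lemma T1: "T \<ge> 1" using TT0 T0_pos by simp

lemma tpos: "t \<ge> T \<Longrightarrow> real t > 0" using T1 by simp

lemma H1': "t \<ge> T \<Longrightarrow> j \<in> J \<Longrightarrow> NN j t \<ge> \<epsilon> * real t"
  using Amin[of t j] tpos[of t] unfolding NN_def Zr_def by (simp add: field_simps)

lemma LL_bound: assumes t: "t \<ge> T" shows "LL t \<le> real d * real t powr (1 - \<epsilon>)"
proof -
  have tp: "real t > 0" using tpos t .
  have "LL t = (\<Sum>i\<in>J. \<Sum>k\<in>{1..r i}. Zr t (Inr (i,k)))" unfolding LL_def by (rule sum_Lv)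
  also have "\<dots> \<le> (\<Sum>i\<in>J. real t * real t powr (- \<epsilon>))"
  proof (intro sum_mono)
    fix i assume i: "i \<in> J"
    have "(\<Sum>k\<in>{1..r i}. Zr t (Inr (i,k))) / real t \<le> real t powr (- \<epsilon>)"
      using Aleaf[OF t i] unfolding Zr_def .
    then show "(\<Sum>k\<in>{1..r i}. Zr t (Inr (i,k))) \<le> real t * real t powr (- \<epsilon>)"
      using tp by (simp add: divide_le_eq mult.commute)
  qed
  also have "\<dots> = real d * (real t * real t powr (- \<epsilon>))" by simp
  also have "real t * real t powr (- \<epsilon>) = real t powr (1 - \<epsilon>)"
  proof -
    have "real t powr (1 - \<epsilon>) = real t powr (1 + (- \<epsilon>))" by simp
    also have "\<dots> = real t powr 1 * real t powr (- \<epsilon>)" by (rule powr_add)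
    finally show ?thesis using tp by simp
  qed
  finally show ?thesis .
qed

lemma tp_interior:
  assumes s: "s \<ge> T" and i: "i \<in> J" and j: "j \<in> J" and ij: "i \<noteq> j" and hs: "h s = Inl i"
  shows "\<bar>trans_prob d r z0 h s (Inl j) - NN j s / (real s - NN i s)\<bar> \<le> LL s / (\<epsilon> * real s)"
proof -
  have sT0: "s \<ge> T0" using s TT0 by simp
  have sp: "real s > 0" using tpos s .
  let ?S = "{y \<in> V. adj d r (h s) y}"
  define Den where "Den = (\<Sum>y\<in>?S. Zr s y)"
  have adjij: "adj d r (h s) (Inl j)" using hs i j ij unfolding adj_def by simp
  have tpe: "trans_prob d r z0 h s (Inl j) = NN j s / Den"
    unfolding trans_prob_def Den_def NN_def Zr_def using adjij by simp
  have sub1: "?S \<subseteq> V - {Inl i}" using hs by (auto simp: adj_def)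
  have "Den \<le> (\<Sum>y\<in>V - {Inl i}. Zr s y)"
    unfolding Den_def using sub1 Zr_nonneg Vd_finite by (intro sum_mono2) auto
  also have "\<dots> = real s - NN i s"
  proof -
    have "Inl i \<in> V" using i unfolding Vd_def by auto
    then have "(\<Sum>y\<in>V - {Inl i}. Zr s y) = (\<Sum>y\<in>V. Zr s y) - Zr s (Inl i)"
      by (simp add: Vd_finite sum_diff1)
    then show ?thesis using Zsum[OF sT0] unfolding NN_def by simp
  qed
  finally have Den1: "Den \<le> real s - NN i s" .
  have sub2: "Inl ` (J - {i}) \<subseteq> ?S" using hs i unfolding adj_def Vd_def by auto
  have "(\<Sum>k\<in>J - {i}. NN k s) = (\<Sum>y\<in>Inl ` (J - {i}). Zr s y)"
    unfolding NN_def by (subst sum.reindex) (auto simp: inj_on_def)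
  also have "\<dots> \<le> Den" unfolding Den_def using sub2 Zr_nonneg Vd_finite by (intro sum_mono2) auto
  finally have Den2: "(\<Sum>k\<in>J - {i}. NN k s) \<le> Den" .
  have sumJ: "(\<Sum>k\<in>J - {i}. NN k s) = real s - LL s - NN i s"
  proof -
    have "(\<Sum>k\<in>J - {i}. NN k s) = (\<Sum>k\<in>J. NN k s) - NN i s" using i by (simp add: sum_diff1)
    then show ?thesis using Zsplit[OF sT0] by simp
  qed
  have NNj: "NN j s \<le> (\<Sum>k\<in>J - {i}. NN k s)"
    using j ij by (intro member_le_sum) (auto simp: NN_def Zr_nonneg)
  have Nj: "NN j s \<ge> \<epsilon> * real s" using H1'[OF s j] .
  have es: "\<epsilon> * real s > 0" using eps sp by simp
  have Denpos: "Den \<ge> \<epsilon> * real s" using Nj NNj Den2 by linarith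
  have Dp: "Den > 0" using Denpos es by linarith
  have gp: "real s - NN i s \<ge> Den" using Den1 .
  have gp': "real s - NN i s > 0" using gp Dp by linarith
  have Nj0: "NN j s \<ge> 0" unfolding NN_def by (simp add: Zr_nonneg)
  have diff: "NN j s / Den - NN j s / (real s - NN i s) = NN j s * ((real s - NN i s) - Den) / (Den * (real s - NN i s))"
    using Dp gp' by (simp add: field_simps)
  have num0: "(real s - NN i s) - Den \<ge> 0" using gp by simp
  have num1: "(real s - NN i s) - Den \<le> LL s" using Den2 sumJ by linarith
  have NjD: "NN j s \<le> real s - NN i s" using NNj Den2 gp by linarith
  have "\<bar>NN j s / Den - NN j s / (real s - NN i s)\<bar> = NN j s * ((real s - NN i s) - Den) / (Den * (real s - NN i s))"
    unfolding diff using Nj0 num0 Dp gp' by (simp add: abs_of_nonneg)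
  also have "\<dots> \<le> (real s - NN i s) * LL s / (Den * (real s - NN i s))"
    using Nj0 num0 num1 NjD Dp gp' LL_nonneg by (intro divide_right_mono mult_mono) auto
  also have "\<dots> = LL s / Den" using gp' by simp
  also have "\<dots> \<le> LL s / (\<epsilon> * real s)" using LL_nonneg Denpos es by (intro divide_left_mono) auto
  finally show ?thesis unfolding tpe .
qed

lemma vis: "s > T0 \<Longrightarrow> NN i s - NN i (s-1) = (if h s = Inl i then 1 else 0)"
  using NN_Suc[of "s-1" i] by simp

lemma step_bound:
  assumes s: "s > T" and j: "j \<in> J"
  shows "\<bar>trans_prob d r z0 h s (Inl j) - (\<Sum>i\<in>J-{j}. (NN i s - NN i (s-1)) * (NN j s / (real s - NN i s)))\<bar>
     \<le> (if h s \<in> Lv d r then 1 else 0) + LL s / (\<epsilon> * real s)"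
proof -
  have sT0: "s > T0" using s TT0 by simp
  have sT: "s \<ge> T" using s by simp
  have nonn: "LL s / (\<epsilon> * real s) \<ge> 0" using LL_nonneg eps by simp
  have hsV: "h s \<in> V" using pathV[of s] sT0 by simp
  have sumv: "(\<Sum>i\<in>J-{j}. (NN i s - NN i (s-1)) * (NN j s / (real s - NN i s)))
     = (\<Sum>i\<in>J-{j}. (if h s = Inl i then NN j s / (real s - NN i s) else 0))"
    using vis[OF sT0] by (intro sum.cong) auto
  show ?thesis
  proof (cases "h s \<in> Lv d r")
    case True
    then have "\<forall>i. h s \<noteq> Inl i" unfolding Lv_def by auto
    then have "(\<Sum>i\<in>J-{j}. (NN i s - NN i (s-1)) * (NN j s / (real s - NN i s))) = 0"
      unfolding sumv by simp
    then show ?thesis using True tp_nonneg[of d r z0 h s "Inl j"] tp_le1[of d r z0 h s "Inl j"] nonn by simp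
  next
    case False
    then obtain i where i: "h s = Inl i" "i \<in> J" using hsV unfolding Vd_split by auto
    show ?thesis
    proof (cases "i = j")
      case True
      have "trans_prob d r z0 h s (Inl j) = 0" using i True by (intro tp_zero) (simp add: adj_def)
      moreover have "(\<Sum>i\<in>J-{j}. (if h s = Inl i then NN j s / (real s - NN i s) else 0)) = 0"
        using i True by (intro sum.neutral) auto
      ultimately show ?thesis using sumv nonn False by simp
    next
      case False
      have "(\<Sum>i'\<in>J-{j}. (if h s = Inl i' then NN j s / (real s - NN i' s) else 0)) = NN j s / (real s - NN i s)"
        using i False by (simp add: sum.delta' cong: if_cong)
      then show ?thesis using tp_interior[OF sT i(2) j False i(1)] sumv \<open>h s \<notin> Lv d r\<close> by simp
    qed
  qed
qed


lemma NN_diff: "T0 \<le> a \<Longrightarrow> a \<le> t \<Longrightarrow> NN j t - NN j a = (\<Sum>s\<in>{a..<t}. (if h (Suc s) = Inl j then 1 else 0))"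
proof -
  assume a: "T0 \<le> a" "a \<le> t"
  show ?thesis using a(2)
  proof (induction t rule: dec_induct)
    case base then show ?case by simp
  next
    case (step t)
    have e: "{a..<Suc t} = insert t {a..<t}" using step by auto
    show ?case unfolding e using step NN_Suc[of t j] a by simp
  qed
qed

lemma Mg_diff: "T0 \<le> a \<Longrightarrow> a \<le> t \<Longrightarrow> Mg j t - Mg j a = (\<Sum>s\<in>{a..<t}. ((if h (Suc s) = Inl j then 1 else 0) - trans_prob d r z0 h s (Inl j)))"
proof -
  assume a: "T0 \<le> a" "a \<le> t"
  have "{T0..<t} = {T0..<a} \<union> {a..<t}" using a by auto
  then have "Mg j t = Mg j a + (\<Sum>s\<in>{a..<t}. ((if h (Suc s) = Inl j then 1 else 0) - trans_prob d r z0 h s (Inl j)))"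
    unfolding Mg_def by (simp add: sum.union_disjoint ivl_disj_int_two(3))
  then show ?thesis by simp
qed

lemma LL_eq: assumes "t \<ge> T0" shows "real t - (\<Sum>j\<in>J. NN j t) = LL t" using Zsplit[OF assms] by linarith

lemma H3b': "t \<ge> T0 \<Longrightarrow> (\<Sum>j\<in>J. NN j (Suc t)) - (\<Sum>j\<in>J. NN j t) \<le> 1"
proof -
  assume t: "t \<ge> T0"
  have "(\<Sum>j\<in>J. NN j (Suc t)) - (\<Sum>j\<in>J. NN j t) = (\<Sum>j\<in>J. (if h (Suc t) = Inl j then 1 else 0))"
    using t by (simp add: NN_Suc sum.distrib)
  also have "\<dots> \<le> 1"
  proof (cases "h (Suc t)")
    case (Inl j0)
    then show ?thesis by (simp add: sum.delta)
  next
    case (Inr b)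
    then show ?thesis by simp
  qed
  finally show ?thesis .
qed

lemma H4': assumes a: "T < a" "a \<le> t" and j: "j \<in> J"
  shows "\<bar>NN j t - NN j a - (\<Sum>s\<in>{a..<t}. \<Sum>i\<in>J-{j}. (NN i s - NN i (s-1)) * (NN j s / (real s - NN i s)))\<bar>
       \<le> \<bar>Mg j t - Mg j a\<bar> + (real t - (\<Sum>j\<in>J. NN j t)) + (\<Sum>s\<in>{a..<t}. (real s - (\<Sum>j\<in>J. NN j s)) / (\<epsilon> * real s))"
proof -
  have aT0: "T0 \<le> a" "T0 < a" using a TT0 by auto
  define g where "g s = (\<Sum>i\<in>J-{j}. (NN i s - NN i (s-1)) * (NN j s / (real s - NN i s)))" for s
  define p where "p s = trans_prob d r z0 h s (Inl j)" for s
  have e1: "NN j t - NN j a - (\<Sum>s\<in>{a..<t}. g s) = (Mg j t - Mg j a) + (\<Sum>s\<in>{a..<t}. p s - g s)"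
    unfolding NN_diff[OF aT0(1) a(2)] Mg_diff[OF aT0(1) a(2)] p_def by (simp add: sum_subtractf)
  have "\<bar>\<Sum>s\<in>{a..<t}. p s - g s\<bar> \<le> (\<Sum>s\<in>{a..<t}. \<bar>p s - g s\<bar>)" by (rule sum_abs)
  also have "\<dots> \<le> (\<Sum>s\<in>{a..<t}. (if h s \<in> Lv d r then 1 else 0) + LL s / (\<epsilon> * real s))"
    unfolding p_def g_def using step_bound j a by (intro sum_mono) auto
  also have "\<dots> = (\<Sum>s\<in>{a..<t}. (if h s \<in> Lv d r then 1 else 0)) + (\<Sum>s\<in>{a..<t}. LL s / (\<epsilon> * real s))"
    by (rule sum.distrib)
  also have "\<dots> \<le> LL t + (\<Sum>s\<in>{a..<t}. LL s / (\<epsilon> * real s))"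
    using leaf_tele[OF aT0(2) a(2)] by simp
  finally have b: "\<bar>\<Sum>s\<in>{a..<t}. p s - g s\<bar> \<le> LL t + (\<Sum>s\<in>{a..<t}. LL s / (\<epsilon> * real s))" .
  have c1: "real t - (\<Sum>j\<in>J. NN j t) = LL t" using LL_eq a aT0 by simp
  have c2: "(\<Sum>s\<in>{a..<t}. (real s - (\<Sum>j\<in>J. NN j s)) / (\<epsilon> * real s)) = (\<Sum>s\<in>{a..<t}. LL s / (\<epsilon> * real s))"
    using LL_eq aT0 by (intro sum.cong) auto
  show ?thesis unfolding c1 c2 g_def[symmetric] e1 using b by linarith
qed

lemma det: "detsys d \<epsilon> T NN Mg (real d)"
proof (unfold_locales)
  show "2 \<le> d" by (rule d2)
  show "0 < \<epsilon>" by (rule eps)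
  show "1 \<le> T" by (rule T1)
  show "0 \<le> real d" by simp
  show "NN j t \<ge> \<epsilon> * real t" if "T \<le> t" "j \<in> J" for t j using H1' that .
  show "(\<Sum>j\<in>J. NN j t) \<le> real t" if "T \<le> t" for t using Zsplit[of t] LL_nonneg[of t] that TT0 by simp
  show "real t - (\<Sum>j\<in>J. NN j t) \<le> real d * real t powr (1 - \<epsilon>)" if "T \<le> t" for t
    using LL_eq[of t] LL_bound[OF that] that TT0 by simp
  show "0 \<le> NN j (Suc t) - NN j t \<and> NN j (Suc t) - NN j t \<le> 1" if "T \<le> t" "j \<in> J" for t j
    using NN_Suc[of t j] that TT0 by simp
  show "(\<Sum>j\<in>J. NN j (Suc t)) - (\<Sum>j\<in>J. NN j t) \<le> 1" if "T \<le> t" for t using H3b'[of t] that TT0 by simp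
  show "\<bar>NN j t - NN j a - (\<Sum>s\<in>{a..<t}. \<Sum>i\<in>J-{j}. (NN i s - NN i (s-1)) * (NN j s / (real s - NN i s)))\<bar>
       \<le> \<bar>Mg j t - Mg j a\<bar> + (real t - (\<Sum>j\<in>J. NN j t)) + (\<Sum>s\<in>{a..<t}. (real s - (\<Sum>j\<in>J. NN j s)) / (\<epsilon> * real s))"
    if "T < a" "a \<le> t" "j \<in> J" for a t j using H4' that .
  show "(\<lambda>t. Mg j t / real t) \<longlonglongrightarrow> 0" if "j \<in> J" for j using mart[OF that] unfolding Mg_def .
qed

lemma conv_int: "j \<in> J \<Longrightarrow> (\<lambda>t. Zr t (Inl j) / real t) \<longlonglongrightarrow> 1 / real d"
  using detsys.det_conv[OF det] unfolding NN_def by blast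

lemma conv_leaf: assumes v: "v \<in> Lv d r" shows "(\<lambda>t. Zr t v / real t) \<longlonglongrightarrow> 0"
proof (rule tendsto_sandwich[of "\<lambda>_. 0" _ _ "\<lambda>t. detsys.L d NN t / real t"])
  show "eventually (\<lambda>t. 0 \<le> Zr t v / real t) sequentially" by (simp add: Zr_nonneg)
  show "eventually (\<lambda>t. Zr t v / real t \<le> detsys.L d NN t / real t) sequentially"
    using eventually_ge_at_top[of T0]
  proof eventually_elim
    case (elim t)
    have "Zr t v \<le> LL t" unfolding LL_def using v Lv_fin by (intro member_le_sum) (auto simp: Zr_nonneg)
    also have "LL t = detsys.L d NN t" using LL_eq[OF elim] unfolding detsys.L_def[OF det] by simp
    finally show ?case by (intro divide_right_mono) auto
  qed
  show "(\<lambda>_. 0) \<longlonglongrightarrow> (0::real)" by simp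
  show "(\<lambda>t. detsys.L d NN t / real t) \<longlonglongrightarrow> 0" by (rule detsys.L_lim[OF det])
qed

end

theorem mainTheorem10:
  fixes M :: "'a measure" and X :: "nat \<Rightarrow> 'a \<Rightarrow> vtx"
    and d :: nat and r :: "nat \<Rightarrow> nat" and z0 :: "vtx \<Rightarrow> nat" and x0 :: vtx and \<epsilon> :: real
  assumes "d \<ge> 3"
    and "\<forall>v\<in>Vd d r. z0 v > 0"
    and "x0 \<in> Vd d r"
    and "is_vrrw M X d r z0 x0"
    and "\<epsilon> > 0"
  shows "AE \<omega> in M. C_eps d r z0 X \<epsilon> \<omega> \<longrightarrow> (\<forall>v\<in>Vd d r. pi_inf d r z0 X \<omega> v = pi_unif d v)"
proof -
  have d2: "d \<ge> 2" using assms(1) by simp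
  interpret vrrw_loc M X d r z0 x0 using d2 assms(2,3,4) by unfold_locales auto
  have "AE \<omega> in M. (\<forall>s\<ge>T0. X s \<omega> \<in> V) \<and> (\<forall>j. (\<lambda>t. G j t (\<lambda>s. X s \<omega>) / real t) \<longlonglongrightarrow> 0)"
    using AE_inV AE_mart by eventually_elim auto
  then show ?thesis
  proof (rule eventually_mono, intro impI)
    fix \<omega>
    assume a: "(\<forall>s\<ge>T0. X s \<omega> \<in> V) \<and> (\<forall>j. (\<lambda>t. G j t (\<lambda>s. X s \<omega>) / real t) \<longlonglongrightarrow> 0)"
      and C: "C_eps d r z0 X \<epsilon> \<omega>"
    from C obtain T where T: "T \<ge> T0" "\<And>t. t \<ge> T \<Longrightarrow> A_eps d r z0 X \<epsilon> t \<omega>"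
      unfolding C_eps_def by blast
    have fin: "finite {1..d}" "{1..d} \<noteq> {}" using d2 by auto
    interpret g: gl d r z0 "\<lambda>s. X s \<omega>" \<epsilon> T
    proof
      show "2 \<le> d" by (rule d2)
      show "\<forall>v\<in>Vd d r. 0 < z0 v" by (rule assms(2))
      show "X s \<omega> \<in> Vd d r" if "tzero d r z0 \<le> s" for s using a that by blast
      show "0 < \<epsilon>" by (rule assms(5))
      show "tzero d r z0 \<le> T" by (rule T(1))
      show "\<epsilon> \<le> real (Zp d r z0 (\<lambda>s. X s \<omega>) t (Inl i)) / real t" if "T \<le> t" "i \<in> {1..d}" for t i
      proof -
        have "\<epsilon> \<le> Min ((\<lambda>i. Z d r z0 X t \<omega> (Inl i) / real t) ` {1..d})"
          using T(2)[OF that(1)] unfolding A_eps_def by blast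
        also have "\<dots> \<le> Z d r z0 X t \<omega> (Inl i) / real t" using fin that(2) by (intro Min_le) auto
        finally show ?thesis unfolding Z_def .
      qed
      show "(\<Sum>k\<in>{1..r i}. real (Zp d r z0 (\<lambda>s. X s \<omega>) t (Inr (i, k)))) / real t \<le> real t powr - \<epsilon>"
        if "T \<le> t" "i \<in> {1..d}" for t i
      proof -
        have "(\<Sum>k\<in>{1..r i}. Z d r z0 X t \<omega> (Inr (i, k))) / real t
            \<le> Max ((\<lambda>i. (\<Sum>j\<in>{1..r i}. Z d r z0 X t \<omega> (Inr (i, j))) / real t) ` {1..d})"
          using fin that(2) by (intro Max_ge) auto
        also have "\<dots> \<le> real t powr - \<epsilon>" using T(2)[OF that(1)] unfolding A_eps_def by blast
        finally show ?thesis unfolding Z_def .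
      qed
      show "(\<lambda>t. (\<Sum>s\<in>{tzero d r z0..<t}. (if X (Suc s) \<omega> = Inl j then 1 else 0) - trans_prob d r z0 (\<lambda>s. X s \<omega>) s (Inl j)) / real t) \<longlonglongrightarrow> 0"
        if "j \<in> {1..d}" for j
        using a unfolding G_def by auto
    qed
    have pit: "pi_t d r z0 X t \<omega> v = g.Zr t v / real t" for t v
      unfolding pi_t_def Z_def g.Zr_def by simp
    have conv: "(\<lambda>t. pi_t d r z0 X t \<omega> v) \<longlonglongrightarrow> pi_unif d v" if v: "v \<in> Vd d r" for v
    proof -
      from v consider (i) i where "v = Inl i" "i \<in> {1..d}" | (l) "v \<in> Lv d r" unfolding Vd_split by auto
      then show ?thesis
      proof cases
        case i
        then show ?thesis unfolding pit pi_unif_def using g.conv_int[of i] by simp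
      next
        case l
        then obtain i k where "v = Inr (i,k)" unfolding Lv_def by auto
        then show ?thesis unfolding pit pi_unif_def using g.conv_leaf[OF l] by simp
      qed
    qed
    have "\<forall>v\<in>Vd d r. convergent (\<lambda>t. pi_t d r z0 X t \<omega> v)" using conv convergentI by blast
    then show "\<forall>v\<in>Vd d r. pi_inf d r z0 X \<omega> v = pi_unif d v"
      unfolding pi_inf_def using conv limI by auto
  qed
qed

end
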